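(* Let $n\in\{2,3\}$. (i) Let $u:[2,\infty)\times\mathbb{R}^n\to\mathbb{R}$ and $\phi,\tilde\phi:[2,\infty)\times\mathbb{R}^n\to\mathbb{C}^{N_0}$ be sufficiently smooth. Then for every multi-index $I\in\mathbb{N}^{n_0}$, $$\widehat{\Gamma}^I(u\phi)=\sum_{I_1+I_2=I}\binom{I}{I_1}(\Gamma^{I_1}u)(\widehat{\Gamma}^{I_2}\phi),\qquad \Gamma^I(\phi^*\gamma^0\tilde{\phi})=\sum_{I_1+I_2=I}\binom{I}{I_1}(\widehat{\Gamma}^{I_1}\phi)^*\gamma^0(\widehat{\Gamma}^{I_2}\tilde{\phi}),$$ and, with constants depending only on $n$, $$|\phi^{*}\gamma^0\tilde{\phi}|\lesssim|[\phi]_{-}|\,|\tilde{\phi}|+|\phi|\,|[\tilde{\phi}]_{-}|\quad\text{everywhere (with } r\neq0),$$ $$|\phi^{*}\gamma^0\tilde{\phi}|\lesssim|(\phi)_{-}|\,|\tilde{\phi}|+|\phi|\,|(\tilde{\phi})_{-}|+\frac{|t^2-r^2|}{t^2}|\phi|\,|\tilde{\phi}|\quad\text{in }\{r<t\}.$$ (ii) For any sufficiently smooth $\phi:[2,\infty)\times\mathbb{R}^n\to\mathbb{C}^{N_0}$, setting $\tilde\phi:=i\gamma^\mu\partial_\mu\phi$, one has $|[\tilde{\phi}]_{-}|\lesssim|G\phi|$.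
   Context: $N_0=2$ ($n=2$), $N_0=4$ ($n=3$); $g=\mathrm{diag}(-1,1,\dots,1)$; Dirac matrices $\gamma^\mu$ ($N_0\times N_0$) satisfy $\gamma^\mu\gamma^\nu+\gamma^\nu\gamma^\mu=-2g^{\mu\nu}I$, $(\gamma^\mu)^*=-g_{\mu\nu}\gamma^\nu$; summation convention. $r=|x|$. $\partial_\alpha$, $L_a=x_a\partial_t+t\partial_a$, $\Omega_{ab}=x_a\partial_b-x_b\partial_a$; modified fields $\widehat L_a=L_a-\frac12\gamma^0\gamma^a$, $\widehat\Omega_{ab}=\Omega_{ab}-\frac12\gamma^a\gamma^b$. $n_0=(n^2+3n+2)/2$; ordered sets $\{\Gamma_k\}=\{(\partial_\alpha)_{0\le\alpha\le n},(L_a),(\Omega_{ab})_{a<b}\}$ and $\{\widehat\Gamma_k\}=\{(\partial_\alpha),(\widehat L_a),(\widehat\Omega_{ab})_{a<b}\}$; for $I=(i_1,\dots,i_{n_0})$, $\Gamma^I=\prod_k\Gamma_k^{i_k}$, $\widehat\Gamma^I=\prod_k\widehat\Gamma_k^{i_k}$ (fixed order), $\binom{I}{I_1}=\prod_k\binom{i_k}{j_k}$ for $I_1=(j_k)$, and the sums run over pairs of multi-indices with $I_1+I_2=I$ componentwise. $[\phi]_-=\phi-\frac{x_a}{r}\gamma^0\gamma^a\phi$, $(\phi)_-=\phi-\frac{x_a}{t}\gamma^0\gamma^a\phi$, $G_a=\partial_a+\frac{x_a}{r}\partial_t$, $|G\phi|=(\sum_a|G_a\phi|^2)^{1/2}$.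 *)

theory Defs
  imports "HOL-Analysis.Analysis"
begin

text \<open>Spacetime points are pairs (t, x) with x in real^'n; spinors are complex^'m;
  complex matrices are complex^'m^'m.\<close>

type_synonym 'n pt = "real \<times> (real ^ 'n)"

definition N0 :: "nat \<Rightarrow> nat" where
  "N0 n = (if n = 2 then 2 else 4)"

definition n0 :: "nat \<Rightarrow> nat" where
  "n0 n = (n^2 + 3*n + 2) div 2"

definition dderiv :: "'a::real_normed_vector \<Rightarrow> ('a \<Rightarrow> 'b::real_normed_vector) \<Rightarrow> 'a \<Rightarrow> 'b" where
  "dderiv v f p = vector_derivative (\<lambda>s. f (p + s *\<^sub>R v)) (at 0)"

coinductive smooth_on :: "'a::real_normed_vector set \<Rightarrow> ('a \<Rightarrow> 'b::real_normed_vector) \<Rightarrow> bool" where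
  "f differentiable_on U \<Longrightarrow> (\<forall>v. smooth_on U (dderiv v f)) \<Longrightarrow> smooth_on U f"

definition dt :: "('n::finite pt \<Rightarrow> 'b::real_normed_vector) \<Rightarrow> 'n pt \<Rightarrow> 'b" where
  "dt f = dderiv (1, 0) f"

definition dx :: "'n::finite \<Rightarrow> ('n pt \<Rightarrow> 'b::real_normed_vector) \<Rightarrow> 'n pt \<Rightarrow> 'b" where
  "dx a f = dderiv (0, axis a 1) f"

datatype 'n vf = VT | VX 'n | VL 'n | VO 'n 'n

fun vf_app :: "'n::finite vf \<Rightarrow> ('n pt \<Rightarrow> 'b::real_normed_vector) \<Rightarrow> 'n pt \<Rightarrow> 'b" where
  "vf_app VT f p = dt f p"
| "vf_app (VX a) f p = dx a f p"
| "vf_app (VL a) f p = (snd p $ a) *\<^sub>R dt f p + fst p *\<^sub>R dx a f p"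
| "vf_app (VO a b) f p = (snd p $ a) *\<^sub>R dx b f p - (snd p $ b) *\<^sub>R dx a f p"

fun hvf_app :: "complex^'m^'m \<Rightarrow> ('n::finite \<Rightarrow> complex^'m^'m) \<Rightarrow> 'n vf
    \<Rightarrow> ('n pt \<Rightarrow> complex^'m) \<Rightarrow> 'n pt \<Rightarrow> complex^'m" where
  "hvf_app g0 g (VL a) f p = vf_app (VL a) f p - (1/2::real) *\<^sub>R ((g0 ** g a) *v f p)"
| "hvf_app g0 g (VO a b) f p = vf_app (VO a b) f p - (1/2::real) *\<^sub>R ((g a ** g b) *v f p)"
| "hvf_app g0 g v f p = vf_app v f p"

definition vf_list :: "'n::{finite,linorder} vf list" where
  "vf_list = (let xs = sorted_list_of_set (UNIV :: 'n set) in
     [VT] @ map VX xs @ map VL xs @ [VO a b. a \<leftarrow> xs, b \<leftarrow> xs, a < b])"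

definition GamI :: "nat list \<Rightarrow> ('n::{finite,linorder} pt \<Rightarrow> 'b::real_normed_vector) \<Rightarrow> 'n pt \<Rightarrow> 'b" where
  "GamI I f = foldr (\<lambda>(v, i) h. (vf_app v ^^ i) h) (zip vf_list I) f"

definition hGamI :: "complex^'m^'m \<Rightarrow> ('n::{finite,linorder} \<Rightarrow> complex^'m^'m) \<Rightarrow> nat list
    \<Rightarrow> ('n pt \<Rightarrow> complex^'m) \<Rightarrow> 'n pt \<Rightarrow> complex^'m" where
  "hGamI g0 g I f = foldr (\<lambda>(v, i) h. (hvf_app g0 g v ^^ i) h) (zip vf_list I) f"

text \<open>Multi-indices I1 with I1 \<le> I componentwise (then I2 = I - I1), and binomials.\<close>
definition subidx :: "nat list \<Rightarrow> nat list set" where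
  "subidx I = {J. length J = length I \<and> (\<forall>k<length I. J ! k \<le> I ! k)}"

definition idx_diff :: "nat list \<Rightarrow> nat list \<Rightarrow> nat list" where
  "idx_diff I J = map2 (-) I J"

definition mbinom :: "nat list \<Rightarrow> nat list \<Rightarrow> nat" where
  "mbinom I J = (\<Prod>k<length I. (I ! k) choose (J ! k))"

definition adj :: "complex^'m^'m \<Rightarrow> complex^'m^'m" where
  "adj M = (\<chi> i j. cnj (M $ j $ i))"

definition bar :: "complex^'m^'m \<Rightarrow> complex^'m \<Rightarrow> complex^'m \<Rightarrow> complex" where
  "bar g0 u w = (\<Sum>i\<in>UNIV. cnj (u $ i) * ((g0 *v w) $ i))"

text \<open>Dirac matrices: anticommutation with g = diag(-1,1,..,1) and hermiticity relations.\<close>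
definition dirac :: "complex^'m^'m \<Rightarrow> ('n::finite \<Rightarrow> complex^'m^'m) \<Rightarrow> bool" where
  "dirac g0 g \<longleftrightarrow>
     g0 ** g0 + g0 ** g0 = 2 *\<^sub>R mat 1 \<and>
     (\<forall>a. g0 ** g a + g a ** g0 = 0) \<and>
     (\<forall>a b. g a ** g b + g b ** g a = (if a = b then -2 *\<^sub>R mat 1 else 0)) \<and>
     adj g0 = g0 \<and> (\<forall>a. adj (g a) = - g a)"

definition rad :: "'n::finite pt \<Rightarrow> real" where
  "rad p = norm (snd p)"

definition minus_r :: "complex^'m^'m \<Rightarrow> ('n::finite \<Rightarrow> complex^'m^'m) \<Rightarrow> 'n pt \<Rightarrow> complex^'m \<Rightarrow> complex^'m" where
  "minus_r g0 g p w = w - (\<Sum>a\<in>UNIV. (snd p $ a / rad p) *\<^sub>R ((g0 ** g a) *v w))"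

definition minus_t :: "complex^'m^'m \<Rightarrow> ('n::finite \<Rightarrow> complex^'m^'m) \<Rightarrow> 'n pt \<Rightarrow> complex^'m \<Rightarrow> complex^'m" where
  "minus_t g0 g p w = w - (\<Sum>a\<in>UNIV. (snd p $ a / fst p) *\<^sub>R ((g0 ** g a) *v w))"

definition Gnorm :: "('n::finite pt \<Rightarrow> complex^'m) \<Rightarrow> 'n pt \<Rightarrow> real" where
  "Gnorm f p = sqrt (\<Sum>a\<in>UNIV. (norm (dx a f p + (snd p $ a / rad p) *\<^sub>R dt f p))^2)"

definition dirac_op :: "complex^'m^'m \<Rightarrow> ('n::finite \<Rightarrow> complex^'m^'m) \<Rightarrow> ('n pt \<Rightarrow> complex^'m) \<Rightarrow> 'n pt \<Rightarrow> complex^'m" where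
  "dirac_op g0 g f p = \<i> *s (g0 *v dt f p + (\<Sum>a\<in>UNIV. g a *v dx a f p))"

end

theory Submission
  imports Defs
begin
definition eqU :: "'a set \<Rightarrow> ('a \<Rightarrow> 'b) \<Rightarrow> ('a \<Rightarrow> 'b) \<Rightarrow> bool" where
  "eqU U f g \<longleftrightarrow> (\<forall>p\<in>U. f p = g p)"

lemma dderiv_has:
  assumes d: "(f has_derivative f') (at p)"
  shows "dderiv v f p = f' v"
proof -
  have l: "((\<lambda>s::real. p + s *\<^sub>R v) has_derivative (\<lambda>s. s *\<^sub>R v)) (at 0)"
    by (auto intro!: derivative_eq_intros)
  have d0: "(f has_derivative f') (at ((\<lambda>s::real. p + s *\<^sub>R v) 0))" using d by simp
  have "((f \<circ> (\<lambda>s. p + s *\<^sub>R v)) has_derivative (f' \<circ> (\<lambda>s. s *\<^sub>R v))) (at 0)"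
    by (rule diff_chain_at[OF l d0])
  moreover have "f' \<circ> (\<lambda>s. s *\<^sub>R v) = (\<lambda>s. s *\<^sub>R f' v)"
    using has_derivative_bounded_linear[OF d] by (auto simp: linear_simps o_def)
  ultimately have "((\<lambda>s. f (p + s *\<^sub>R v)) has_vector_derivative f' v) (at 0)"
    by (simp add: has_vector_derivative_def o_def)
  then show ?thesis unfolding dderiv_def by (rule vector_derivative_at)
qed

lemma dderiv_local:
  assumes U: "open U" and p: "p \<in> U" and e: "eqU U f g"
  shows "dderiv v f p = dderiv v g p"
proof -
  obtain r where r: "r > 0" "ball p r \<subseteq> U" using U p open_contains_ball by blast
  have ev: "eventually (\<lambda>s::real. s \<in> UNIV \<longrightarrow> f (p + s *\<^sub>R v) = g (p + s *\<^sub>R v)) (nhds 0)"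
    unfolding eventually_nhds_metric
  proof (intro exI[of _ "r / (norm v + 1)"] conjI allI impI)
    show "0 < r / (norm v + 1)" using r by (simp add: add_nonneg_pos)
  next
    fix s :: real assume s: "dist s 0 < r / (norm v + 1)"
    have "norm (s *\<^sub>R v) \<le> \<bar>s\<bar> * (norm v + 1)" by (simp add: mult_left_mono)
    also have "\<dots> < r" using s by (simp add: pos_less_divide_eq add_nonneg_pos)
    finally have "p + s *\<^sub>R v \<in> ball p r" by (simp add: dist_norm)
    then show "f (p + s *\<^sub>R v) = g (p + s *\<^sub>R v)" using r e by (auto simp: eqU_def)
  qed
  show ?thesis unfolding dderiv_def
    by (rule vector_derivative_cong_eq[OF ev]) auto
qed

lemma eqU_dderiv: "open U \<Longrightarrow> eqU U f g \<Longrightarrow> eqU U (dderiv v f) (dderiv v g)"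
  using dderiv_local by (auto simp: eqU_def)

lemma diff_on_at: "open U \<Longrightarrow> f differentiable_on U \<Longrightarrow> p \<in> U \<Longrightarrow> f differentiable (at p)"
  using differentiable_on_eq_differentiable_at by blast

lemma differentiable_on_eqU:
  assumes U: "open U" and d: "f differentiable_on U" and e: "eqU U f g"
  shows "g differentiable_on U"
proof -
  have "g differentiable (at p)" if p: "p \<in> U" for p
  proof -
    obtain f' where "(f has_derivative f') (at p)"
      using diff_on_at[OF U d p] unfolding differentiable_def by blast
    then have "(g has_derivative f') (at p)"
      by (rule has_derivative_transform_within_open[OF _ U p]) (use e in \<open>auto simp: eqU_def\<close>)
    then show ?thesis unfolding differentiable_def by blast
  qed
  then show ?thesis using U differentiable_on_eq_differentiable_at by blast
qed

lemma smooth_diffon: "smooth_on U f \<Longrightarrow> f differentiable_on U"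
  by (erule smooth_on.cases) auto

lemma smooth_dderiv: "smooth_on U f \<Longrightarrow> smooth_on U (dderiv v f)"
  by (erule smooth_on.cases) auto

lemma smooth_at: "open U \<Longrightarrow> smooth_on U f \<Longrightarrow> p \<in> U \<Longrightarrow> f differentiable (at p)"
  using diff_on_at smooth_diffon by blast

lemma smooth_coinduct_eq:
  assumes U: "open U" and X0: "X f"
    and step: "\<And>f. X f \<Longrightarrow> f differentiable_on U \<and>
                 (\<forall>v. \<exists>h. (X h \<or> smooth_on U h) \<and> eqU U (dderiv v f) h)"
  shows "smooth_on U f"
proof -
  define R where "R = (\<lambda>U' F. U' = U \<and> (\<exists>h. (X h \<or> smooth_on U h) \<and> eqU U F h))"
  have "R U f" using X0 by (auto simp: R_def eqU_def)
  show ?thesis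
  proof (rule smooth_on.coinduct[where X=R])
    show "R U f" by fact
  next
    fix U' F assume "R U' F"
    then obtain h where U': "U' = U" and h: "X h \<or> smooth_on U h" and e: "eqU U F h"
      by (auto simp: R_def)
    have eh: "eqU U h F" using e by (auto simp: eqU_def)
    have dh: "h differentiable_on U" using h step smooth_diffon by blast
    have dF: "F differentiable_on U" by (rule differentiable_on_eqU[OF U dh eh])
    have "R U (dderiv v F) \<or> smooth_on U (dderiv v F)" for v
    proof -
      have e1: "eqU U (dderiv v F) (dderiv v h)" by (rule eqU_dderiv[OF U e])
      show ?thesis
      proof (cases "X h")
        case True
        then obtain h' where h': "X h' \<or> smooth_on U h'" and e2: "eqU U (dderiv v h) h'"
          using step by blast
        have "eqU U (dderiv v F) h'" using e1 e2 by (auto simp: eqU_def)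
        then show ?thesis using h' by (auto simp: R_def)
      next
        case False
        then have "smooth_on U (dderiv v h)" using h smooth_dderiv by blast
        then show ?thesis using e1 by (auto simp: R_def)
      qed
    qed
    then show "\<exists>f' U''. U' = U'' \<and> F = f' \<and> f' differentiable_on U'' \<and>
         (\<forall>v. R U'' (dderiv v f') \<or> smooth_on U'' (dderiv v f'))"
      using U' dF by auto
  qed
qed

lemma smooth_eqU:
  assumes U: "open U" and s: "smooth_on U f" and e: "eqU U f g"
  shows "smooth_on U g"
proof (rule smooth_coinduct_eq[OF U, where X="\<lambda>F. F = g"])
  fix F assume "F = g"
  have "\<exists>h. (h = g \<or> smooth_on U h) \<and> eqU U (dderiv v F) h" for v
    using smooth_dderiv[OF s, of v] eqU_dderiv[OF U e, of v] \<open>F = g\<close>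
    by (intro exI[of _ "dderiv v f"]) (auto simp: eqU_def)
  then show "F differentiable_on U \<and> (\<forall>v. \<exists>h. (h = g \<or> smooth_on U h) \<and> eqU U (dderiv v F) h)"
    using differentiable_on_eqU[OF U smooth_diffon[OF s] e] \<open>F = g\<close> by blast
qed simp

lemma smooth_const:
  assumes U: "open U" shows "smooth_on U (\<lambda>p. c)"
proof (rule smooth_coinduct_eq[OF U, where X="\<lambda>F. \<exists>c. F = (\<lambda>p. c)"])
  fix F :: "'a \<Rightarrow> 'b" assume "\<exists>c. F = (\<lambda>p. c)"
  then obtain c where F: "F = (\<lambda>p. c)" by blast
  have "dderiv v F p = 0" for v p
    unfolding F by (rule dderiv_has[where f'="\<lambda>_. 0", simplified]) (rule has_derivative_const)
  then show "F differentiable_on U \<and> (\<forall>v. \<exists>h. ((\<exists>c. h = (\<lambda>p. c)) \<or> smooth_on U h) \<and> eqU U (dderiv v F) h)"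
    unfolding eqU_def by (auto simp: F)
qed auto

lemma dderiv_add:
  assumes "f differentiable (at p)" "g differentiable (at p)"
  shows "dderiv v (\<lambda>q. f q + g q) p = dderiv v f p + dderiv v g p"
proof -
  obtain f' g' where f': "(f has_derivative f') (at p)" and g': "(g has_derivative g') (at p)"
    using assms unfolding differentiable_def by blast
  have "((\<lambda>q. f q + g q) has_derivative (\<lambda>h. f' h + g' h)) (at p)"
    by (rule has_derivative_add[OF f' g'])
  then show ?thesis using dderiv_has[OF f'] dderiv_has[OF g'] dderiv_has by metis
qed

lemma dderiv_diff:
  assumes "f differentiable (at p)" "g differentiable (at p)"
  shows "dderiv v (\<lambda>q. f q - g q) p = dderiv v f p - dderiv v g p"
proof -
  obtain f' g' where f': "(f has_derivative f') (at p)" and g': "(g has_derivative g') (at p)"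
    using assms unfolding differentiable_def by blast
  have "((\<lambda>q. f q - g q) has_derivative (\<lambda>h. f' h - g' h)) (at p)"
    by (rule has_derivative_diff[OF f' g'])
  then show ?thesis using dderiv_has[OF f'] dderiv_has[OF g'] dderiv_has by metis
qed

lemma dderiv_lin:
  assumes L: "bounded_linear L" and d: "f differentiable (at p)"
  shows "dderiv v (\<lambda>q. L (f q)) p = L (dderiv v f p)"
proof -
  obtain f' where f': "(f has_derivative f') (at p)" using d unfolding differentiable_def by blast
  have "((\<lambda>q. L (f q)) has_derivative (\<lambda>h. L (f' h))) (at p)"
    by (rule bounded_linear.has_derivative[OF L f'])
  then show ?thesis using dderiv_has[OF f'] dderiv_has by metis
qed

lemma dderiv_bil:
  assumes P: "bounded_bilinear P" and d: "f differentiable (at p)" "g differentiable (at p)"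
  shows "dderiv v (\<lambda>q. P (f q) (g q)) p = P (dderiv v f p) (g p) + P (f p) (dderiv v g p)"
proof -
  obtain f' g' where f': "(f has_derivative f') (at p)" and g': "(g has_derivative g') (at p)"
    using d unfolding differentiable_def by blast
  have "((\<lambda>q. P (f q) (g q)) has_derivative (\<lambda>h. P (f p) (g' h) + P (f' h) (g p))) (at p)"
    by (rule bounded_bilinear.FDERIV[OF P f' g'])
  then show ?thesis using dderiv_has[OF f'] dderiv_has[OF g'] dderiv_has by (metis add.commute)
qed

lemma differentiable_bil:
  assumes P: "bounded_bilinear P" and d: "f differentiable (at p)" "g differentiable (at p)"
  shows "(\<lambda>q. P (f q) (g q)) differentiable (at p)"
proof -
  obtain f' g' where f': "(f has_derivative f') (at p)" and g': "(g has_derivative g') (at p)"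
    using d unfolding differentiable_def by blast
  show ?thesis using bounded_bilinear.FDERIV[OF P f' g'] unfolding differentiable_def by blast
qed

lemma differentiable_lin:
  assumes L: "bounded_linear L" and d: "f differentiable (at p)"
  shows "(\<lambda>q. L (f q)) differentiable (at p)"
proof -
  obtain f' where f': "(f has_derivative f') (at p)" using d unfolding differentiable_def by blast
  show ?thesis using bounded_linear.has_derivative[OF L f'] unfolding differentiable_def by blast
qed

lemma diffon_from_at: "open U \<Longrightarrow> (\<And>p. p \<in> U \<Longrightarrow> f differentiable (at p)) \<Longrightarrow> f differentiable_on U"
  using differentiable_on_eq_differentiable_at by blast

lemma smooth_add:
  assumes U: "open U" and "smooth_on U f" "smooth_on U g"
  shows "smooth_on U (\<lambda>p. f p + g p)"
proof (rule smooth_coinduct_eq[OF U, where X="\<lambda>F. \<exists>f g. smooth_on U f \<and> smooth_on U g \<and> F = (\<lambda>p. f p + g p)"])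
  fix F assume "\<exists>f g. smooth_on U f \<and> smooth_on U g \<and> F = (\<lambda>p. f p + g p)"
  then obtain f g where f: "smooth_on U f" and g: "smooth_on U g" and F: "F = (\<lambda>p. f p + g p)" by blast
  have "F differentiable_on U"
    unfolding F by (rule diffon_from_at[OF U]) (intro differentiable_add smooth_at[OF U f] smooth_at[OF U g])
  moreover have "eqU U (dderiv v F) (\<lambda>p. dderiv v f p + dderiv v g p)" for v
    unfolding eqU_def F using dderiv_add smooth_at[OF U f] smooth_at[OF U g] by blast
  ultimately show "F differentiable_on U \<and> (\<forall>v. \<exists>h. ((\<exists>f g. smooth_on U f \<and> smooth_on U g \<and> h = (\<lambda>p. f p + g p)) \<or> smooth_on U h) \<and> eqU U (dderiv v F) h)"
    using smooth_dderiv[OF f] smooth_dderiv[OF g] by blast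
qed (use assms in blast)

lemma smooth_diff:
  assumes U: "open U" and "smooth_on U f" "smooth_on U g"
  shows "smooth_on U (\<lambda>p. f p - g p)"
proof (rule smooth_coinduct_eq[OF U, where X="\<lambda>F. \<exists>f g. smooth_on U f \<and> smooth_on U g \<and> F = (\<lambda>p. f p - g p)"])
  fix F assume "\<exists>f g. smooth_on U f \<and> smooth_on U g \<and> F = (\<lambda>p. f p - g p)"
  then obtain f g where f: "smooth_on U f" and g: "smooth_on U g" and F: "F = (\<lambda>p. f p - g p)" by blast
  have "F differentiable_on U"
    unfolding F by (rule diffon_from_at[OF U]) (intro differentiable_diff smooth_at[OF U f] smooth_at[OF U g])
  moreover have "eqU U (dderiv v F) (\<lambda>p. dderiv v f p - dderiv v g p)" for v
    unfolding eqU_def F using dderiv_diff smooth_at[OF U f] smooth_at[OF U g] by blast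
  ultimately show "F differentiable_on U \<and> (\<forall>v. \<exists>h. ((\<exists>f g. smooth_on U f \<and> smooth_on U g \<and> h = (\<lambda>p. f p - g p)) \<or> smooth_on U h) \<and> eqU U (dderiv v F) h)"
    using smooth_dderiv[OF f] smooth_dderiv[OF g] by blast
qed (use assms in blast)

lemma smooth_lin:
  assumes U: "open U" and L: "bounded_linear L" and s: "smooth_on U f"
  shows "smooth_on U (\<lambda>p. L (f p))"
proof (rule smooth_coinduct_eq[OF U, where X="\<lambda>F. \<exists>f. smooth_on U f \<and> F = (\<lambda>p. L (f p))"])
  fix F assume "\<exists>f. smooth_on U f \<and> F = (\<lambda>p. L (f p))"
  then obtain f where f: "smooth_on U f" and F: "F = (\<lambda>p. L (f p))" by blast
  have "F differentiable_on U"
    unfolding F by (rule diffon_from_at[OF U]) (intro differentiable_lin[OF L] smooth_at[OF U f])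
  moreover have "eqU U (dderiv v F) (\<lambda>p. L (dderiv v f p))" for v
    unfolding eqU_def F using dderiv_lin[OF L] smooth_at[OF U f] by blast
  ultimately show "F differentiable_on U \<and> (\<forall>v. \<exists>h. ((\<exists>f. smooth_on U f \<and> h = (\<lambda>p. L (f p))) \<or> smooth_on U h) \<and> eqU U (dderiv v F) h)"
    using smooth_dderiv[OF f] by blast
qed (use s in blast)

lemma smooth_linfun:
  assumes U: "open U" and L: "bounded_linear L"
  shows "smooth_on U L"
proof (rule smooth_coinduct_eq[OF U, where X="\<lambda>F. F = L"])
  fix F assume F: "F = L"
  have "F differentiable_on U"
    unfolding F using bounded_linear.has_derivative[OF L has_derivative_ident]
    by (auto simp: differentiable_on_def differentiable_def)
  moreover have "eqU U (dderiv v F) (\<lambda>p. L v)" for v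
    unfolding eqU_def F using dderiv_has[OF bounded_linear.has_derivative[OF L has_derivative_ident]]
    by simp
  ultimately show "F differentiable_on U \<and> (\<forall>v. \<exists>h. (h = L \<or> smooth_on U h) \<and> eqU U (dderiv v F) h)"
    using smooth_const[OF U] by blast
qed simp


lemma dderiv_const: "dderiv v (\<lambda>q. c) p = 0"
  by (rule dderiv_has[where f'="\<lambda>_. 0", simplified]) (rule has_derivative_const)

lemma bil_list_diff:
  assumes U: "open U" and P: "bounded_bilinear P" and p: "p \<in> U"
  shows "(\<forall>(a,b)\<in>set fs. smooth_on U a \<and> smooth_on U b) \<Longrightarrow>
    (\<lambda>q. sum_list (map (\<lambda>(a,b). P (a q) (b q)) fs)) differentiable (at p) \<and>
    dderiv v (\<lambda>q. sum_list (map (\<lambda>(a,b). P (a q) (b q)) fs)) p =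
      sum_list (map (\<lambda>(a,b). P (dderiv v a p) (b p) + P (a p) (dderiv v b p)) fs)"
proof (induction fs)
  case Nil
  then show ?case by (simp add: dderiv_const)
next
  case (Cons ab fs)
  obtain a b where ab: "ab = (a, b)" by fastforce
  have a: "smooth_on U a" and b: "smooth_on U b" using Cons.prems ab by auto
  have IH: "(\<lambda>q. sum_list (map (\<lambda>(a,b). P (a q) (b q)) fs)) differentiable (at p) \<and>
    dderiv v (\<lambda>q. sum_list (map (\<lambda>(a,b). P (a q) (b q)) fs)) p =
      sum_list (map (\<lambda>(a,b). P (dderiv v a p) (b p) + P (a p) (dderiv v b p)) fs)"
    using Cons by auto
  have da: "a differentiable (at p)" and db: "b differentiable (at p)"
    using smooth_at[OF U a p] smooth_at[OF U b p] .
  have dab: "(\<lambda>q. P (a q) (b q)) differentiable (at p)" by (rule differentiable_bil[OF P da db])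
  have "(\<lambda>q. P (a q) (b q) + sum_list (map (\<lambda>(a,b). P (a q) (b q)) fs)) differentiable (at p)"
    using differentiable_add[OF dab] IH by blast
  moreover have "dderiv v (\<lambda>q. P (a q) (b q) + sum_list (map (\<lambda>(a,b). P (a q) (b q)) fs)) p
     = (P (dderiv v a p) (b p) + P (a p) (dderiv v b p)) + sum_list (map (\<lambda>(a,b). P (dderiv v a p) (b p) + P (a p) (dderiv v b p)) fs)"
    using dderiv_add[OF dab, of "\<lambda>q. sum_list (map (\<lambda>(a,b). P (a q) (b q)) fs)"] IH
      dderiv_bil[OF P da db] by simp
  ultimately show ?case by (simp add: ab)
qed

lemma sum_list_pair_add:
  fixes X :: "'a \<Rightarrow> 'b \<Rightarrow> 'c::comm_monoid_add"
  shows "sum_list (map (\<lambda>(a,b). X a b + Y a b) fs) = sum_list (map (\<lambda>(a,b). X a b) fs) + sum_list (map (\<lambda>(a,b). Y a b) fs)"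
  by (induction fs) (auto simp: add_ac)

lemma smooth_bil:
  assumes U: "open U" and P: "bounded_bilinear P" and f: "smooth_on U f" and g: "smooth_on U g"
  shows "smooth_on U (\<lambda>p. P (f p) (g p))"
proof (rule smooth_coinduct_eq[OF U, where X="\<lambda>F. \<exists>fs. (\<forall>(a,b)\<in>set fs. smooth_on U a \<and> smooth_on U b) \<and>
      F = (\<lambda>q. sum_list (map (\<lambda>(a,b). P (a q) (b q)) fs))"])
  show "\<exists>fs. (\<forall>(a,b)\<in>set fs. smooth_on U a \<and> smooth_on U b) \<and>
      (\<lambda>p. P (f p) (g p)) = (\<lambda>q. sum_list (map (\<lambda>(a,b). P (a q) (b q)) fs))"
    using f g by (intro exI[of _ "[(f,g)]"]) auto
next
  fix F assume "\<exists>fs. (\<forall>(a,b)\<in>set fs. smooth_on U a \<and> smooth_on U b) \<and>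
      F = (\<lambda>q. sum_list (map (\<lambda>(a,b). P (a q) (b q)) fs))"
  then obtain fs where fs: "\<forall>(a,b)\<in>set fs. smooth_on U a \<and> smooth_on U b"
    and F: "F = (\<lambda>q. sum_list (map (\<lambda>(a,b). P (a q) (b q)) fs))" by blast
  have "F differentiable_on U"
    unfolding F by (rule diffon_from_at[OF U]) (use bil_list_diff[OF U P _ fs] in blast)
  moreover have "\<exists>h. ((\<exists>fs. (\<forall>(a,b)\<in>set fs. smooth_on U a \<and> smooth_on U b) \<and>
      h = (\<lambda>q. sum_list (map (\<lambda>(a,b). P (a q) (b q)) fs))) \<or> smooth_on U h) \<and> eqU U (dderiv v F) h" for v
  proof -
    define fs' where "fs' = map (\<lambda>(a,b). (dderiv v a, b)) fs @ map (\<lambda>(a,b). (a, dderiv v b)) fs"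
    have s': "\<forall>(a,b)\<in>set fs'. smooth_on U a \<and> smooth_on U b"
      using fs by (auto simp: fs'_def smooth_dderiv)
    have "eqU U (dderiv v F) (\<lambda>q. sum_list (map (\<lambda>(a,b). P (a q) (b q)) fs'))"
      unfolding eqU_def F
    proof
      fix p assume p: "p \<in> U"
      have "dderiv v (\<lambda>q. sum_list (map (\<lambda>(a,b). P (a q) (b q)) fs)) p =
         sum_list (map (\<lambda>(a,b). P (dderiv v a p) (b p) + P (a p) (dderiv v b p)) fs)"
        using bil_list_diff[OF U P p fs] by blast
      also have "\<dots> = sum_list (map (\<lambda>(a,b). P (a p) (b p)) fs')"
        unfolding sum_list_pair_add fs'_def by (simp add: o_def case_prod_unfold)
      finally show "dderiv v (\<lambda>q. sum_list (map (\<lambda>(a,b). P (a q) (b q)) fs)) p = sum_list (map (\<lambda>(a,b). P (a p) (b p)) fs')" .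
    qed
    then show ?thesis using s' by blast
  qed
  ultimately show "F differentiable_on U \<and> (\<forall>v. \<exists>h. ((\<exists>fs. (\<forall>(a,b)\<in>set fs. smooth_on U a \<and> smooth_on U b) \<and>
      h = (\<lambda>q. sum_list (map (\<lambda>(a,b). P (a q) (b q)) fs))) \<or> smooth_on U h) \<and> eqU U (dderiv v F) h)"
    by blast
qed

definition cdot :: "complex^'m \<Rightarrow> complex^'m \<Rightarrow> complex" where
  "cdot u w = (\<Sum>i\<in>UNIV. cnj (u $ i) * w $ i)"

lemma bar_cdot: "bar g0 u w = cdot u (g0 *v w)"
  by (simp add: bar_def cdot_def)

lemma cdot_mv: "cdot (M *v u) w = cdot u (adj M *v w)"
proof -
  have "cdot (M *v u) w = (\<Sum>i\<in>UNIV. \<Sum>j\<in>UNIV. cnj (M$i$j) * cnj (u$j) * w$i)"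
    by (simp add: cdot_def matrix_vector_mult_def sum_distrib_right)
  also have "\<dots> = (\<Sum>j\<in>UNIV. \<Sum>i\<in>UNIV. cnj (M$i$j) * cnj (u$j) * w$i)"
    by (rule sum.swap)
  also have "\<dots> = cdot u (adj M *v w)"
    by (simp add: cdot_def matrix_vector_mult_def adj_def sum_distrib_left mult_ac)
  finally show ?thesis .
qed

lemma cdot_add1: "cdot (u + v) w = cdot u w + cdot v w"
  by (simp add: cdot_def sum.distrib distrib_right)
lemma cdot_add2: "cdot u (v + w) = cdot u v + cdot u w"
  by (simp add: cdot_def sum.distrib distrib_left)
lemma cdot_diff1: "cdot (u - v) w = cdot u w - cdot v w"
  by (simp add: cdot_def sum_subtractf left_diff_distrib)
lemma cdot_diff2: "cdot u (v - w) = cdot u v - cdot u w"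
  by (simp add: cdot_def sum_subtractf right_diff_distrib)
lemma cdot_neg1: "cdot (- u) w = - cdot u w"
  by (simp add: cdot_def sum_negf)
lemma cdot_neg2: "cdot u (- w) = - cdot u w"
  by (simp add: cdot_def sum_negf)
lemma cdot_scaleR1: "cdot (c *\<^sub>R u) w = of_real c * cdot u w"
  unfolding cdot_def vector_scaleR_component by (simp add: scaleR_conv_of_real sum_distrib_left mult_ac)
lemma cdot_scaleR2: "cdot u (c *\<^sub>R w) = of_real c * cdot u w"
  unfolding cdot_def vector_scaleR_component by (simp add: scaleR_conv_of_real sum_distrib_left mult_ac)
lemma cdot_zero1[simp]: "cdot 0 w = 0" by (simp add: cdot_def)
lemma cdot_zero2[simp]: "cdot u 0 = 0" by (simp add: cdot_def)
lemma cdot_sum1: "cdot (\<Sum>a\<in>A. F a) w = (\<Sum>a\<in>A. cdot (F a) w)"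
  by (induction A rule: infinite_finite_induct) (simp_all add: cdot_add1)
lemma cdot_sum2: "cdot u (\<Sum>a\<in>A. F a) = (\<Sum>a\<in>A. cdot u (F a))"
  by (induction A rule: infinite_finite_induct) (simp_all add: cdot_add2)

lemma cdot_self: "cdot w w = of_real ((norm w)^2)"
proof -
  have "cdot w w = (\<Sum>i\<in>UNIV. of_real ((norm (w$i))^2))"
    unfolding cdot_def by (rule sum.cong) (auto, metis complex_norm_square mult.commute of_real_power)
  also have "\<dots> = of_real (\<Sum>i\<in>UNIV. (norm (w$i))^2)"
    by (simp add: of_real_sum)
  also have "(\<Sum>i\<in>UNIV. (norm (w$i))^2) = (norm w)^2"
    by (simp add: norm_vec_def L2_set_def sum_nonneg)
  finally show ?thesis .
qed

lemma norm_cdot: "norm (cdot u w) \<le> norm u * norm w"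
proof -
  have "norm (cdot u w) \<le> (\<Sum>i\<in>UNIV. norm (cnj (u $ i) * w $ i))"
    unfolding cdot_def by (rule norm_sum)
  also have "\<dots> = (\<Sum>i\<in>UNIV. \<bar>norm (u $ i)\<bar> * \<bar>norm (w $ i)\<bar>)"
    by (simp add: norm_mult)
  also have "\<dots> \<le> L2_set (\<lambda>i. norm (u $ i)) UNIV * L2_set (\<lambda>i. norm (w $ i)) UNIV"
    by (rule L2_set_mult_ineq)
  finally show ?thesis by (simp add: norm_vec_def)
qed

lemma unitary_norm:
  assumes "\<And>x. adj M *v (M *v x) = x"
  shows "norm (M *v w) = norm w"
proof -
  have "of_real ((norm (M *v w))^2) = (of_real ((norm w)^2) :: complex)"
    using cdot_mv[of M w "M *v w"] assms by (simp add: cdot_self)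
  then have "(norm (M *v w))^2 = (norm w)^2" using of_real_eq_iff by blast
  then show ?thesis by (simp add: power2_eq_iff_nonneg)
qed

lemma mv_scaleR_mat: "(c *\<^sub>R A) *v (w::complex^'m) = c *\<^sub>R (A *v w)"
  by (simp add: vec_eq_iff matrix_vector_mult_def scaleR_sum_right)

lemma mv_neg_mat: "(- A) *v (w::complex^'m) = - (A *v w)"
  by (simp add: vec_eq_iff matrix_vector_mult_def sum_negf)

lemma mv_scaleR: "A *v (c *\<^sub>R w) = c *\<^sub>R (A *v (w::complex^'m))"
  using matrix_vector_mul_linear[of A] by (simp add: linear_iff)

lemma mv_sum: "A *v (\<Sum>a\<in>S. F a) = (\<Sum>a\<in>S. A *v (F a::complex^'m))"
  by (induction S rule: infinite_finite_induct) (auto simp: matrix_vector_right_distrib)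

lemma mv_neg: "A *v (- w) = - (A *v (w::complex^'m))"
  by (simp add: vec_eq_iff matrix_vector_mult_def sum_negf)

lemma mv_smult: "A *v (c *s w) = c *s (A *v (w::complex^'m))"
  by (simp add: vec_eq_iff matrix_vector_mult_def sum_distrib_left mult_ac)

lemma double_cancel: "(y::'a::real_vector) + y = z + z \<Longrightarrow> y = z"
proof -
  assume "y + y = z + z"
  then have "(2::real) *\<^sub>R y = 2 *\<^sub>R z" by (simp only: scaleR_2)
  then show ?thesis by simp
qed

lemma norm_smult_i: "norm (\<i> *s (v::complex^'m)) = norm v"
  by (simp add: norm_vec_def norm_mult)

lemma smult_sum: "(k::complex) *s (\<Sum>a\<in>S. F a) = (\<Sum>a\<in>S. k *s (F a::complex^'m))"
  by (induction S rule: infinite_finite_induct) (auto simp: vector_ssub_ldistrib vec_eq_iff distrib_left)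

lemma smult_scaleR: "(k::complex) *s (c *\<^sub>R (v::complex^'m)) = c *\<^sub>R (k *s v)"
  by (simp add: vec_eq_iff scaleR_conv_of_real)

context
  fixes g0 :: "complex^'m^'m" and g :: "'n::finite \<Rightarrow> complex^'m^'m"
  assumes D: "dirac g0 g"
begin

lemma g0g0: "g0 *v (g0 *v w) = w"
proof -
  have "(g0 ** g0 + g0 ** g0) *v w = (2 *\<^sub>R mat 1) *v w" using D by (simp add: dirac_def)
  then have "g0 *v (g0 *v w) + g0 *v (g0 *v w) = 2 *\<^sub>R w"
    unfolding matrix_vector_mult_add_rdistrib matrix_vector_mul_assoc mv_scaleR_mat by simp
  then have "(2::real) *\<^sub>R (g0 *v (g0 *v w)) = 2 *\<^sub>R w" by (simp only: scaleR_2)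
  then show ?thesis by simp
qed

lemma g0ga: "g0 *v (g a *v w) = - (g a *v (g0 *v w))"
proof -
  have "(g0 ** g a + g a ** g0) *v w = 0 *v w" using D by (simp add: dirac_def)
  then have "g0 *v (g a *v w) + g a *v (g0 *v w) = 0"
    by (simp add: matrix_vector_mult_add_rdistrib matrix_vector_mul_assoc)
  then show ?thesis by (simp add: eq_neg_iff_add_eq_0)
qed

lemma gagb: "a \<noteq> b \<Longrightarrow> g a *v (g b *v w) = - (g b *v (g a *v w))"
proof -
  assume "a \<noteq> b"
  then have "(g a ** g b + g b ** g a) *v w = 0 *v w" using D by (simp add: dirac_def)
  then have "g a *v (g b *v w) + g b *v (g a *v w) = 0"
    by (simp add: matrix_vector_mult_add_rdistrib matrix_vector_mul_assoc)
  then show ?thesis by (simp add: eq_neg_iff_add_eq_0)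
qed

lemma gaga: "g a *v (g a *v w) = - w"
proof -
  have "(g a ** g a + g a ** g a) *v w = (-2 *\<^sub>R mat 1) *v w" using D by (simp add: dirac_def)
  then have "g a *v (g a *v w) + g a *v (g a *v w) = (-2) *\<^sub>R w"
    unfolding matrix_vector_mult_add_rdistrib matrix_vector_mul_assoc mv_scaleR_mat by simp
  then have "(2::real) *\<^sub>R (g a *v (g a *v w)) = 2 *\<^sub>R (- w)"
    by (metis scaleR_2 scaleR_minus_left scaleR_minus_right)
  then show ?thesis by (metis scaleR_cancel_left zero_neq_numeral)
qed

lemma cdot_g0: "cdot (g0 *v u) w = cdot u (g0 *v w)"
  using D by (simp add: cdot_mv dirac_def)

lemma cdot_ga: "cdot (g a *v u) w = - cdot u (g a *v w)"
  using D by (simp add: cdot_mv dirac_def mv_neg_mat cdot_neg2)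

lemma norm_g0: "norm (g0 *v w) = norm w"
  by (rule unitary_norm) (use D in \<open>simp add: dirac_def g0g0\<close>)

lemma norm_ga: "norm (g a *v w) = norm w"
  by (rule unitary_norm) (use D in \<open>simp add: dirac_def mv_neg_mat gaga\<close>)


definition Kop :: "('n \<Rightarrow> real) \<Rightarrow> complex^'m \<Rightarrow> complex^'m" where
  "Kop c w = (\<Sum>a\<in>UNIV. c a *\<^sub>R ((g0 ** g a) *v w))"

lemma Kop_alt: "Kop c w = (\<Sum>a\<in>UNIV. c a *\<^sub>R (g0 *v (g a *v w)))"
  by (simp add: Kop_def matrix_vector_mul_assoc)

lemma bar_Kop: "bar g0 (Kop c f) h + bar g0 f (Kop c h) = 0"
proof -
  have 1: "bar g0 (Kop c f) h = - (\<Sum>a\<in>UNIV. of_real (c a) * cdot f (g a *v h))"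
    by (simp add: Kop_alt bar_cdot cdot_sum1 cdot_scaleR1 cdot_g0 g0g0 cdot_ga sum_negf)
  have 2: "bar g0 f (Kop c h) = (\<Sum>a\<in>UNIV. of_real (c a) * cdot f (g a *v h))"
    by (simp add: Kop_alt bar_cdot cdot_sum2 cdot_scaleR2 mv_sum mv_scaleR g0g0)
  show ?thesis using 1 2 by simp
qed

lemma norm_bar: "norm (bar g0 u w) \<le> norm u * norm w"
  using norm_cdot[of u "g0 *v w"] by (simp add: bar_cdot norm_g0)

lemma bar_diff1: "bar g0 (u - v) w = bar g0 u w - bar g0 v w"
  by (simp add: bar_cdot cdot_diff1)
lemma bar_diff2: "bar g0 u (v - w) = bar g0 u v - bar g0 u w"
  by (simp add: bar_cdot cdot_diff2 matrix_vector_mult_diff_distrib)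

lemma bar_bound:
  "norm (bar g0 f h) \<le> norm (f - Kop c f) * norm h + norm f * norm (h - Kop c h)"
proof -
  have "2 * bar g0 f h = bar g0 (f - Kop c f) h + bar g0 f (h - Kop c h)"
    using bar_Kop[of c f h] by (simp add: bar_diff1 bar_diff2 algebra_simps)
  then have "2 * norm (bar g0 f h) \<le> norm (bar g0 (f - Kop c f) h) + norm (bar g0 f (h - Kop c h))"
    by (metis norm_mult norm_numeral norm_triangle_ineq)
  moreover have "norm (bar g0 (f - Kop c f) h) \<le> norm (f - Kop c f) * norm h" by (rule norm_bar)
  moreover have "norm (bar g0 f (h - Kop c h)) \<le> norm f * norm (h - Kop c h)" by (rule norm_bar)
  moreover have "0 \<le> norm (bar g0 f h)" by simp
  ultimately show ?thesis by linarith
qed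

lemma double_sum_gg:
  "(\<Sum>a\<in>UNIV. \<Sum>b\<in>UNIV. (\<omega> a * \<omega> b) *\<^sub>R (g a *v (g b *v x)))
     = - (\<Sum>a\<in>UNIV. (\<omega> a)^2) *\<^sub>R x"
proof (rule double_cancel)
  let ?S = "(\<Sum>a\<in>UNIV. \<Sum>b\<in>UNIV. (\<omega> a * \<omega> b) *\<^sub>R (g a *v (g b *v x)))"
  have sw: "?S = (\<Sum>a\<in>UNIV. \<Sum>b\<in>UNIV. (\<omega> a * \<omega> b) *\<^sub>R (g b *v (g a *v x)))"
    by (subst sum.swap) (simp only: mult.commute)
  have "?S + ?S = ?S + (\<Sum>a\<in>UNIV. \<Sum>b\<in>UNIV. (\<omega> a * \<omega> b) *\<^sub>R (g b *v (g a *v x)))"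
    using sw by (simp only:)
  also have "\<dots> = (\<Sum>a\<in>UNIV. \<Sum>b\<in>UNIV. (\<omega> a * \<omega> b) *\<^sub>R (g a *v (g b *v x) + g b *v (g a *v x)))"
    by (simp only: sum.distrib[symmetric] scaleR_add_right)
  also have "\<dots> = (\<Sum>a\<in>UNIV. \<Sum>b\<in>UNIV. (if b = a then (- ((\<omega> a)^2)) *\<^sub>R (x + x) else 0))"
  proof (intro sum.cong refl)
    fix a b
    show "(\<omega> a * \<omega> b) *\<^sub>R (g a *v (g b *v x) + g b *v (g a *v x))
       = (if b = a then (- ((\<omega> a)^2)) *\<^sub>R (x + x) else 0)"
    proof (cases "a = b")
      case True
      have e: "g a *v (g b *v x) + g b *v (g a *v x) = - (x + x)"
        unfolding True gaga minus_add_distrib ..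
      show ?thesis unfolding e using True by (simp add: power2_eq_square)
    next
      case False
      have e: "g a *v (g b *v x) + g b *v (g a *v x) = 0"
        unfolding gagb[OF False, of x] by (rule add.left_inverse)
      show ?thesis unfolding e using False by simp
    qed
  qed
  also have "\<dots> = (\<Sum>a\<in>UNIV. (- ((\<omega> a)^2)) *\<^sub>R (x + x))"
    by (simp only: sum.delta finite UNIV_I if_True)
  also have "\<dots> = (\<Sum>a\<in>UNIV. (- ((\<omega> a)^2))) *\<^sub>R (x + x)"
    by (simp only: scaleR_sum_left)
  also have "\<dots> = - (\<Sum>a\<in>UNIV. (\<omega> a)^2) *\<^sub>R x + - (\<Sum>a\<in>UNIV. (\<omega> a)^2) *\<^sub>R x"
    by (simp only: sum_negf scaleR_add_right)
  finally show "?S + ?S = - (\<Sum>a\<in>UNIV. (\<omega> a)^2) *\<^sub>R x + - (\<Sum>a\<in>UNIV. (\<omega> a)^2) *\<^sub>R x" .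
qed

lemma Kop_zero:
  assumes "(\<Sum>a\<in>UNIV. (\<omega> a)^2) = 1"
  shows "(g0 *v x - (\<Sum>b\<in>UNIV. \<omega> b *\<^sub>R (g b *v x)))
     - Kop \<omega> (g0 *v x - (\<Sum>b\<in>UNIV. \<omega> b *\<^sub>R (g b *v x))) = 0"
proof -
  have A: "Kop \<omega> (g0 *v x) = - (\<Sum>b\<in>UNIV. \<omega> b *\<^sub>R (g b *v x))"
  proof -
    have e: "g0 *v (g a *v (g0 *v x)) = - (g a *v x)" for a by (simp only: g0ga g0g0)
    show ?thesis unfolding Kop_alt e scaleR_minus_right sum_negf ..
  qed
  have B: "Kop \<omega> (\<Sum>b\<in>UNIV. \<omega> b *\<^sub>R (g b *v x)) = g0 *v (- x)"
  proof -
    have "Kop \<omega> (\<Sum>b\<in>UNIV. \<omega> b *\<^sub>R (g b *v x))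
        = g0 *v (\<Sum>a\<in>UNIV. \<Sum>b\<in>UNIV. (\<omega> a * \<omega> b) *\<^sub>R (g a *v (g b *v x)))"
      by (simp only: Kop_alt mv_sum mv_scaleR scaleR_sum_right scaleR_scaleR)
    then show ?thesis using double_sum_gg[of \<omega> x] assms by simp
  qed
  have L: "Kop \<omega> (u - v) = Kop \<omega> u - Kop \<omega> v" for u v
    by (simp add: Kop_def matrix_vector_mult_diff_distrib scaleR_diff_right sum_subtractf)
  show ?thesis by (simp add: L A B mv_neg)
qed


lemma Kop_add: "Kop c (u + v) = Kop c u + Kop c v"
  by (simp add: Kop_def matrix_vector_right_distrib scaleR_add_right sum.distrib)
lemma Kop_diff: "Kop c (u - v) = Kop c u - Kop c v"
  by (simp add: Kop_def matrix_vector_mult_diff_distrib scaleR_diff_right sum_subtractf)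
lemma Kop_smult: "Kop c (k *s w) = k *s Kop c w"
  by (simp add: Kop_def mv_smult smult_sum smult_scaleR)

lemma norm_Kop:
  assumes "\<And>a. \<bar>c a\<bar> \<le> 1"
  shows "norm (Kop c w) \<le> real CARD('n) * norm w"
proof -
  have "norm (Kop c w) \<le> (\<Sum>a\<in>UNIV. norm (c a *\<^sub>R (g0 *v (g a *v w))))"
    unfolding Kop_alt by (rule norm_sum)
  also have "\<dots> = (\<Sum>a\<in>UNIV. \<bar>c a\<bar> * norm w)"
    by (simp add: norm_g0 norm_ga)
  also have "\<dots> \<le> (\<Sum>a\<in>(UNIV::'n set). norm w)"
    by (intro sum_mono) (simp add: assms mult_left_le_one_le)
  finally show ?thesis by simp
qed

lemma dirac_bound:
  assumes sq: "(\<Sum>a\<in>UNIV. (\<omega> a)^2) = 1" and le1: "\<And>a. \<bar>\<omega> a\<bar> \<le> 1"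
  shows "norm (\<i> *s (g0 *v D0 + (\<Sum>a\<in>UNIV. g a *v D a))
           - Kop \<omega> (\<i> *s (g0 *v D0 + (\<Sum>a\<in>UNIV. g a *v D a))))
       \<le> (1 + real CARD('n)) * real CARD('n) * sqrt (\<Sum>a\<in>UNIV. (norm (D a + \<omega> a *\<^sub>R D0))^2)"
proof -
  define Gs where "Gs = (\<Sum>a\<in>UNIV. g a *v (D a + \<omega> a *\<^sub>R D0))"
  define Z where "Z = g0 *v D0 - (\<Sum>b\<in>UNIV. \<omega> b *\<^sub>R (g b *v D0))"
  define Gn where "Gn = sqrt (\<Sum>a\<in>UNIV. (norm (D a + \<omega> a *\<^sub>R D0))^2)"
  have z: "g0 *v D0 + (\<Sum>a\<in>UNIV. g a *v D a) = Gs + Z"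
    by (simp add: Gs_def Z_def matrix_vector_right_distrib mv_scaleR sum.distrib)
  have TZ: "Z - Kop \<omega> Z = 0" unfolding Z_def by (rule Kop_zero[OF sq])
  have T: "(Gs + Z) - Kop \<omega> (Gs + Z) = Gs - Kop \<omega> Gs"
    using TZ by (simp add: Kop_add algebra_simps)
  have lhs: "\<i> *s (Gs + Z) - Kop \<omega> (\<i> *s (Gs + Z)) = \<i> *s (Gs - Kop \<omega> Gs)"
    by (simp only: Kop_smult T[symmetric] vector_ssub_ldistrib)
  have nT: "norm (Gs - Kop \<omega> Gs) \<le> (1 + real CARD('n)) * norm Gs"
  proof -
    have "norm (Gs - Kop \<omega> Gs) \<le> norm Gs + norm (Kop \<omega> Gs)" by (rule norm_triangle_ineq4)
    also have "\<dots> \<le> norm Gs + real CARD('n) * norm Gs" using norm_Kop[of \<omega> Gs] le1 by simp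
    finally show ?thesis by (simp add: algebra_simps)
  qed
  have nG: "norm Gs \<le> real CARD('n) * Gn"
  proof -
    have "norm Gs \<le> (\<Sum>a\<in>UNIV. norm (g a *v (D a + \<omega> a *\<^sub>R D0)))"
      unfolding Gs_def by (rule norm_sum)
    also have "\<dots> = (\<Sum>a\<in>UNIV. norm (D a + \<omega> a *\<^sub>R D0))" by (simp add: norm_ga)
    also have "\<dots> \<le> (\<Sum>a\<in>(UNIV::'n set). Gn)"
    proof (rule sum_mono)
      fix a :: 'n
      have "norm (D a + \<omega> a *\<^sub>R D0) \<le> L2_set (\<lambda>a. norm (D a + \<omega> a *\<^sub>R D0)) UNIV"
        by (rule member_le_L2_set) auto
      then show "norm (D a + \<omega> a *\<^sub>R D0) \<le> Gn" by (simp add: Gn_def L2_set_def)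
    qed
    finally show ?thesis by simp
  qed
  have "norm (\<i> *s (Gs - Kop \<omega> Gs)) \<le> (1 + real CARD('n)) * (real CARD('n) * Gn)"
    unfolding norm_smult_i using nT nG
    by (meson mult_left_mono order_trans add_nonneg_nonneg of_nat_0_le_iff zero_le_one)
  then show ?thesis unfolding z lhs Gn_def by (simp add: mult_ac)
qed

end

lemma pascal_sum:
  fixes X :: "nat \<Rightarrow> nat \<Rightarrow> 'c::real_vector"
  shows "(\<Sum>j\<le>i. real (i choose j) *\<^sub>R (X (Suc j) (i - j) + X j (Suc i - j)))
       = (\<Sum>j\<le>Suc i. real (Suc i choose j) *\<^sub>R X j (Suc i - j))"
proof -
  have A: "(\<Sum>j\<le>i. real (i choose j) *\<^sub>R X (Suc j) (i - j))
     = (\<Sum>j\<le>Suc i. (if j = 0 then 0 else real (i choose (j - 1))) *\<^sub>R X j (Suc i - j))"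
    by (simp only: sum.atMost_Suc_shift) simp
  have B: "(\<Sum>j\<le>i. real (i choose j) *\<^sub>R X j (Suc i - j))
     = (\<Sum>j\<le>Suc i. real (i choose j) *\<^sub>R X j (Suc i - j))"
    by (simp add: sum.atMost_Suc)
  have "(\<Sum>j\<le>i. real (i choose j) *\<^sub>R (X (Suc j) (i - j) + X j (Suc i - j)))
     = (\<Sum>j\<le>i. real (i choose j) *\<^sub>R X (Suc j) (i - j)) + (\<Sum>j\<le>i. real (i choose j) *\<^sub>R X j (Suc i - j))"
    by (simp add: scaleR_add_right sum.distrib)
  also have "\<dots> = (\<Sum>j\<le>Suc i. ((if j = 0 then 0 else real (i choose (j - 1))) + real (i choose j)) *\<^sub>R X j (Suc i - j))"
    unfolding A B by (simp add: scaleR_add_left sum.distrib)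
  also have "\<dots> = (\<Sum>j\<le>Suc i. real (Suc i choose j) *\<^sub>R X j (Suc i - j))"
  proof (rule sum.cong[OF refl])
    fix j assume "j \<in> {..Suc i}"
    show "((if j = 0 then 0 else real (i choose (j - 1))) + real (i choose j)) *\<^sub>R X j (Suc i - j)
        = real (Suc i choose j) *\<^sub>R X j (Suc i - j)"
      by (cases j) auto
  qed
  finally show ?thesis .
qed

definition Fop :: "('v \<Rightarrow> ('x \<Rightarrow> 'a) \<Rightarrow> 'x \<Rightarrow> 'a) \<Rightarrow> 'v list \<Rightarrow> nat list \<Rightarrow> ('x \<Rightarrow> 'a) \<Rightarrow> 'x \<Rightarrow> 'a" where
  "Fop op vs I f = foldr (\<lambda>(v, i) h. (op v ^^ i) h) (zip vs I) f"

lemma Fop_Nil1[simp]: "Fop op [] I f = f" by (simp add: Fop_def)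
lemma Fop_Nil2[simp]: "Fop op vs [] f = f" by (simp add: Fop_def)
lemma Fop_Cons[simp]: "Fop op (v # vs) (i # I) f = (op v ^^ i) (Fop op vs I f)"
  by (simp add: Fop_def)

lemma subidx_Nil: "subidx [] = {[]}" by (auto simp: subidx_def)

lemma subidx_Cons: "subidx (i # I) = (\<lambda>(j, J). j # J) ` ({..i} \<times> subidx I)"
proof (rule set_eqI)
  fix K
  show "K \<in> subidx (i # I) \<longleftrightarrow> K \<in> (\<lambda>(j, J). j # J) ` ({..i} \<times> subidx I)"
  proof (cases K)
    case Nil then show ?thesis by (auto simp: subidx_def)
  next
    case (Cons j J)
    have "(\<forall>k<length (i # I). (j # J) ! k \<le> (i # I) ! k) \<longleftrightarrow> j \<le> i \<and> (\<forall>k<length I. J ! k \<le> I ! k)"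
      by (auto simp: less_Suc_eq_0_disj All_less_Suc2)
    then show ?thesis using Cons by (auto simp: subidx_def)
  qed
qed

lemma finite_subidx: "finite (subidx I)"
  by (induction I) (auto simp: subidx_Nil subidx_Cons)

lemma mbinom_Nil: "mbinom [] [] = 1" by (simp add: mbinom_def)
lemma mbinom_Cons: "mbinom (i # I) (j # J) = (i choose j) * mbinom I J"
  unfolding mbinom_def length_Cons prod.lessThan_Suc_shift by simp
lemma idx_diff_Nil: "idx_diff [] [] = []" by (simp add: idx_diff_def)
lemma idx_diff_Cons: "idx_diff (i # I) (j # J) = (i - j) # idx_diff I J"
  by (simp add: idx_diff_def)

lemma smooth_scale_sum:
  assumes U: "open U" and S: "finite S" and sm: "\<And>J. J \<in> S \<Longrightarrow> smooth_on U (F J)"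
  shows "smooth_on U (\<lambda>p. \<Sum>J\<in>S. c J *\<^sub>R F J p)"
  using S sm
proof (induction S rule: finite_induct)
  case empty then show ?case by (simp add: smooth_const[OF U])
next
  case (insert x S)
  have "smooth_on U (\<lambda>p. c x *\<^sub>R F x p)"
    by (rule smooth_lin[OF U bounded_linear_scaleR_right]) (use insert in auto)
  then show ?case using insert smooth_add[OF U] by simp
qed

locale leib =
  fixes U :: "'x::real_normed_vector set" and V :: "'v set"
    and opA :: "'v \<Rightarrow> ('x \<Rightarrow> 'a::real_normed_vector) \<Rightarrow> 'x \<Rightarrow> 'a"
    and opB :: "'v \<Rightarrow> ('x \<Rightarrow> 'b::real_normed_vector) \<Rightarrow> 'x \<Rightarrow> 'b"
    and opC :: "'v \<Rightarrow> ('x \<Rightarrow> 'c::real_normed_vector) \<Rightarrow> 'x \<Rightarrow> 'c"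
    and P :: "'a \<Rightarrow> 'b \<Rightarrow> 'c"
  assumes U: "open U" and P: "bounded_bilinear P"
    and smA: "\<And>v f. v \<in> V \<Longrightarrow> smooth_on U f \<Longrightarrow> smooth_on U (opA v f)"
    and smB: "\<And>v f. v \<in> V \<Longrightarrow> smooth_on U f \<Longrightarrow> smooth_on U (opB v f)"
    and smC: "\<And>v f. v \<in> V \<Longrightarrow> smooth_on U f \<Longrightarrow> smooth_on U (opC v f)"
    and locC: "\<And>v f g. eqU U f g \<Longrightarrow> eqU U (opC v f) (opC v g)"
    and addC: "\<And>v f g. smooth_on U f \<Longrightarrow> smooth_on U g \<Longrightarrow>
        eqU U (opC v (\<lambda>p. f p + g p)) (\<lambda>p. opC v f p + opC v g p)"
    and scaleC: "\<And>v f c. smooth_on U f \<Longrightarrow> eqU U (opC v (\<lambda>p. c *\<^sub>R f p)) (\<lambda>p. c *\<^sub>R opC v f p)"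
    and zeroC: "\<And>v. eqU U (opC v (\<lambda>p. 0)) (\<lambda>p. 0)"
    and prodC: "\<And>v f g. v \<in> V \<Longrightarrow> smooth_on U f \<Longrightarrow> smooth_on U g \<Longrightarrow>
        eqU U (opC v (\<lambda>p. P (f p) (g p))) (\<lambda>p. P (opA v f p) (g p) + P (f p) (opB v g p))"
begin

lemma iterC_loc: "eqU U f g \<Longrightarrow> eqU U ((opC v ^^ i) f) ((opC v ^^ i) g)"
  by (induction i) (auto intro: locC)

lemma iterA_sm: "v \<in> V \<Longrightarrow> smooth_on U f \<Longrightarrow> smooth_on U ((opA v ^^ i) f)"
  by (induction i) (auto intro: smA)
lemma iterB_sm: "v \<in> V \<Longrightarrow> smooth_on U f \<Longrightarrow> smooth_on U ((opB v ^^ i) f)"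
  by (induction i) (auto intro: smB)
lemma iterC_sm: "v \<in> V \<Longrightarrow> smooth_on U f \<Longrightarrow> smooth_on U ((opC v ^^ i) f)"
  by (induction i) (auto intro: smC)

lemma FopA_sm: "set ws \<subseteq> V \<Longrightarrow> smooth_on U f \<Longrightarrow> smooth_on U (Fop opA ws I f)"
proof (induction ws arbitrary: I)
  case Nil then show ?case by simp
next
  case (Cons v ws) then show ?case by (cases I) (auto intro: iterA_sm)
qed

lemma FopB_sm: "set ws \<subseteq> V \<Longrightarrow> smooth_on U f \<Longrightarrow> smooth_on U (Fop opB ws I f)"
proof (induction ws arbitrary: I)
  case Nil then show ?case by simp
next
  case (Cons v ws) then show ?case by (cases I) (auto intro: iterB_sm)
qed

lemma linC:
  assumes S: "finite S" and sm: "\<And>J. J \<in> S \<Longrightarrow> smooth_on U (F J)"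
  shows "eqU U (opC v (\<lambda>p. \<Sum>J\<in>S. c J *\<^sub>R F J p)) (\<lambda>p. \<Sum>J\<in>S. c J *\<^sub>R opC v (F J) p)"
  using S sm
proof (induction S rule: finite_induct)
  case empty then show ?case using zeroC by simp
next
  case (insert x S)
  have s1: "smooth_on U (\<lambda>p. c x *\<^sub>R F x p)"
    by (rule smooth_lin[OF U bounded_linear_scaleR_right]) (use insert in auto)
  have s2: "smooth_on U (\<lambda>p. \<Sum>J\<in>S. c J *\<^sub>R F J p)"
    by (rule smooth_scale_sum[OF U insert(1)]) (use insert in auto)
  have e1: "eqU U (opC v (\<lambda>p. c x *\<^sub>R F x p + (\<Sum>J\<in>S. c J *\<^sub>R F J p)))
      (\<lambda>p. opC v (\<lambda>p. c x *\<^sub>R F x p) p + opC v (\<lambda>p. \<Sum>J\<in>S. c J *\<^sub>R F J p) p)"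
    by (rule addC[OF s1 s2])
  have e2: "eqU U (opC v (\<lambda>p. c x *\<^sub>R F x p)) (\<lambda>p. c x *\<^sub>R opC v (F x) p)"
    using scaleC[of "F x" v "c x"] insert by auto
  have e3: "eqU U (opC v (\<lambda>p. \<Sum>J\<in>S. c J *\<^sub>R F J p)) (\<lambda>p. \<Sum>J\<in>S. c J *\<^sub>R opC v (F J) p)"
    using insert by auto
  show ?case using e1 e2 e3 insert(1,2) by (simp add: eqU_def)
qed

lemma iter_linC:
  assumes v: "v \<in> V" and S: "finite S" and sm: "\<And>J. J \<in> S \<Longrightarrow> smooth_on U (F J)"
  shows "eqU U ((opC v ^^ i) (\<lambda>p. \<Sum>J\<in>S. c J *\<^sub>R F J p)) (\<lambda>p. \<Sum>J\<in>S. c J *\<^sub>R (opC v ^^ i) (F J) p)"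
proof (induction i)
  case 0 then show ?case by (simp add: eqU_def)
next
  case (Suc i)
  have e1: "eqU U (opC v ((opC v ^^ i) (\<lambda>p. \<Sum>J\<in>S. c J *\<^sub>R F J p)))
                 (opC v (\<lambda>p. \<Sum>J\<in>S. c J *\<^sub>R (opC v ^^ i) (F J) p))"
    by (rule locC[OF Suc])
  have e2: "eqU U (opC v (\<lambda>p. \<Sum>J\<in>S. c J *\<^sub>R (opC v ^^ i) (F J) p))
                 (\<lambda>p. \<Sum>J\<in>S. c J *\<^sub>R opC v ((opC v ^^ i) (F J)) p)"
    by (rule linC[OF S]) (use iterC_sm[OF v] sm in auto)
  show ?case using e1 e2 by (simp add: eqU_def)
qed

lemma leibniz1:
  assumes v: "v \<in> V" and f: "smooth_on U f" and g: "smooth_on U g"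
  shows "eqU U ((opC v ^^ i) (\<lambda>p. P (f p) (g p)))
     (\<lambda>p. \<Sum>j\<le>i. real (i choose j) *\<^sub>R P ((opA v ^^ j) f p) ((opB v ^^ (i - j)) g p))"
proof (induction i)
  case 0 then show ?case by (simp add: eqU_def)
next
  case (Suc i)
  define Q where "Q j = (\<lambda>p. P ((opA v ^^ j) f p) ((opB v ^^ (i - j)) g p))" for j
  have sQ: "smooth_on U (Q j)" for j
    unfolding Q_def by (rule smooth_bil[OF U P iterA_sm[OF v f] iterB_sm[OF v g]])
  have e1: "eqU U (opC v ((opC v ^^ i) (\<lambda>p. P (f p) (g p))))
      (opC v (\<lambda>p. \<Sum>j\<le>i. real (i choose j) *\<^sub>R Q j p))"
    by (rule locC) (use Suc in \<open>simp add: Q_def\<close>)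
  have e2: "eqU U (opC v (\<lambda>p. \<Sum>j\<le>i. real (i choose j) *\<^sub>R Q j p))
      (\<lambda>p. \<Sum>j\<le>i. real (i choose j) *\<^sub>R opC v (Q j) p)"
    by (rule linC) (auto simp: sQ)
  have e3: "eqU U (opC v (Q j)) (\<lambda>p. P ((opA v ^^ Suc j) f p) ((opB v ^^ (i - j)) g p)
                                    + P ((opA v ^^ j) f p) ((opB v ^^ (Suc i - j)) g p))"
    if "j \<le> i" for j
  proof -
    have "Suc i - j = Suc (i - j)" using that by simp
    then show ?thesis
      using prodC[OF v iterA_sm[OF v f] iterB_sm[OF v g], of j "i - j"] by (simp add: Q_def)
  qed
  show ?case
    unfolding eqU_def
  proof
    fix p assume p: "p \<in> U"
    have "(opC v ^^ Suc i) (\<lambda>p. P (f p) (g p)) p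
       = (\<Sum>j\<le>i. real (i choose j) *\<^sub>R opC v (Q j) p)"
      using e1 e2 p by (simp add: eqU_def)
    also have "\<dots> = (\<Sum>j\<le>i. real (i choose j) *\<^sub>R (P ((opA v ^^ Suc j) f p) ((opB v ^^ (i - j)) g p)
                                    + P ((opA v ^^ j) f p) ((opB v ^^ (Suc i - j)) g p)))"
      using e3 p by (intro sum.cong refl) (auto simp: eqU_def)
    also have "\<dots> = (\<Sum>j\<le>Suc i. real (Suc i choose j) *\<^sub>R P ((opA v ^^ j) f p) ((opB v ^^ (Suc i - j)) g p))"
      by (rule pascal_sum[where X="\<lambda>j k. P ((opA v ^^ j) f p) ((opB v ^^ k) g p)"])
    finally show "(opC v ^^ Suc i) (\<lambda>p. P (f p) (g p)) p = (\<Sum>j\<le>Suc i. real (Suc i choose j) *\<^sub>R P ((opA v ^^ j) f p) ((opB v ^^ (Suc i - j)) g p))" .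
  qed
qed

lemma leibniz_multi:
  assumes ws: "set ws \<subseteq> V" and len: "length I \<le> length ws" and u: "smooth_on U u" and f: "smooth_on U f"
  shows "eqU U (Fop opC ws I (\<lambda>p. P (u p) (f p)))
     (\<lambda>p. \<Sum>J\<in>subidx I. real (mbinom I J) *\<^sub>R P (Fop opA ws J u p) (Fop opB ws (idx_diff I J) f p))"
  using ws len
proof (induction ws arbitrary: I)
  case Nil
  then show ?case by (simp add: subidx_Nil mbinom_Nil idx_diff_Nil eqU_def)
next
  case (Cons v ws)
  show ?case
  proof (cases I)
    case Nil
    then show ?thesis by (simp add: subidx_Nil mbinom_Nil idx_diff_Nil eqU_def)
  next
    case (Cons i I')
    have v: "v \<in> V" and ws': "set ws \<subseteq> V" using Cons.prems by auto
    have len': "length I' \<le> length ws" using Cons.prems Cons by simp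
    define Q where "Q J = (\<lambda>p. P (Fop opA ws J u p) (Fop opB ws (idx_diff I' J) f p))" for J
    have sQ: "smooth_on U (Q J)" for J
      unfolding Q_def by (rule smooth_bil[OF U P FopA_sm[OF ws' u] FopB_sm[OF ws' f]])
    have IH: "eqU U (Fop opC ws I' (\<lambda>p. P (u p) (f p))) (\<lambda>p. \<Sum>J\<in>subidx I'. real (mbinom I' J) *\<^sub>R Q J p)"
      using Cons.IH[OF ws' len'] by (simp add: Q_def)
    have e1: "eqU U ((opC v ^^ i) (Fop opC ws I' (\<lambda>p. P (u p) (f p))))
        ((opC v ^^ i) (\<lambda>p. \<Sum>J\<in>subidx I'. real (mbinom I' J) *\<^sub>R Q J p))"
      by (rule iterC_loc[OF IH])
    have e2: "eqU U ((opC v ^^ i) (\<lambda>p. \<Sum>J\<in>subidx I'. real (mbinom I' J) *\<^sub>R Q J p))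
        (\<lambda>p. \<Sum>J\<in>subidx I'. real (mbinom I' J) *\<^sub>R (opC v ^^ i) (Q J) p)"
      by (rule iter_linC[OF v finite_subidx]) (rule sQ)
    have e3: "eqU U ((opC v ^^ i) (Q J))
       (\<lambda>p. \<Sum>j\<le>i. real (i choose j) *\<^sub>R P ((opA v ^^ j) (Fop opA ws J u) p)
                ((opB v ^^ (i - j)) (Fop opB ws (idx_diff I' J) f) p))" for J
      unfolding Q_def by (rule leibniz1[OF v FopA_sm[OF ws' u] FopB_sm[OF ws' f]])
    define G where "G p K = real (mbinom (i # I') K) *\<^sub>R
        P (Fop opA (v # ws) K u p) (Fop opB (v # ws) (idx_diff (i # I') K) f p)" for p K
    have inj: "inj_on (\<lambda>(j, J). j # J) ({..i} \<times> subidx I')"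
      by (auto simp: inj_on_def)
    show ?thesis
      unfolding eqU_def
    proof
      fix p assume p: "p \<in> U"
      have "Fop opC (v # ws) I (\<lambda>p. P (u p) (f p)) p
          = (\<Sum>J\<in>subidx I'. real (mbinom I' J) *\<^sub>R (opC v ^^ i) (Q J) p)"
        using e1 e2 p by (simp add: Cons eqU_def)
      also have "\<dots> = (\<Sum>J\<in>subidx I'. real (mbinom I' J) *\<^sub>R
          (\<Sum>j\<le>i. real (i choose j) *\<^sub>R P ((opA v ^^ j) (Fop opA ws J u) p)
                ((opB v ^^ (i - j)) (Fop opB ws (idx_diff I' J) f) p)))"
        using e3 p by (intro sum.cong refl) (auto simp: eqU_def)
      also have "\<dots> = (\<Sum>J\<in>subidx I'. \<Sum>j\<le>i. G p (j # J))"
        by (intro sum.cong refl)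
           (simp add: G_def scaleR_sum_right mbinom_Cons idx_diff_Cons mult.commute)
      also have "\<dots> = (\<Sum>j\<le>i. \<Sum>J\<in>subidx I'. G p (j # J))"
        by (rule sum.swap)
      also have "\<dots> = (\<Sum>x\<in>{..i} \<times> subidx I'. G p ((\<lambda>(j, J). j # J) x))"
        by (simp add: sum.cartesian_product case_prod_unfold)
      also have "\<dots> = (\<Sum>K\<in>subidx I. G p K)"
        unfolding Cons subidx_Cons by (simp add: sum.reindex[OF inj] o_def)
      finally show "Fop opC (v # ws) I (\<lambda>p. P (u p) (f p)) p =
         (\<Sum>J\<in>subidx I. real (mbinom I J) *\<^sub>R P (Fop opA (v # ws) J u p) (Fop opB (v # ws) (idx_diff I J) f p))"
        by (simp add: G_def Cons)
    qed
  qed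
qed

end

lemma bl_coord: "bounded_linear (\<lambda>p::'n::finite pt. snd p $ a)"
  by (rule bounded_linear_compose[OF bounded_linear_vec_nth bounded_linear_snd])

lemma vf_eta:
  "vf_app VT f = dderiv (1, 0) f"
  "vf_app (VX a) f = dderiv (0, axis a 1) f"
  "vf_app (VL a) f = (\<lambda>p. (snd p $ a) *\<^sub>R dderiv (1, 0) f p + fst p *\<^sub>R dderiv (0, axis a 1) f p)"
  "vf_app (VO a b) f = (\<lambda>p. (snd p $ a) *\<^sub>R dderiv (0, axis b 1) f p - (snd p $ b) *\<^sub>R dderiv (0, axis a 1) f p)"
  by (auto simp: dt_def dx_def)

lemma smooth_vf:
  assumes U: "open U" and f: "smooth_on U (f :: 'n::finite pt \<Rightarrow> 'b::real_normed_vector)"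
  shows "smooth_on U (vf_app v f)"
proof -
  have sc: "smooth_on U (\<lambda>p::'n pt. snd p $ a)" for a by (rule smooth_linfun[OF U bl_coord])
  have st: "smooth_on U (\<lambda>p::'n pt. fst p)" by (rule smooth_linfun[OF U bounded_linear_fst])
  have sd: "smooth_on U (dderiv w f)" for w by (rule smooth_dderiv[OF f])
  have sm: "smooth_on U (\<lambda>p. c p *\<^sub>R dderiv w f p)" if "smooth_on U c" for c w
    by (rule smooth_bil[OF U bounded_bilinear_scaleR that sd])
  show ?thesis
    by (cases v) (auto simp only: vf_eta intro!: sd smooth_add[OF U] smooth_diff[OF U] sm sc st)
qed

lemma bl_mv: "bounded_linear (\<lambda>w::complex^'m. c *\<^sub>R (M *v w))"
proof -
  have "linear (\<lambda>w::complex^'m. M *v w)" by (rule matrix_vector_mul_linear)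
  then have "bounded_linear (\<lambda>w::complex^'m. M *v w)" using linear_conv_bounded_linear by blast
  then show ?thesis by (rule bounded_linear_compose[OF bounded_linear_scaleR_right])
qed

lemma hvf_eta:
  "hvf_app g0 g VT f = vf_app VT f"
  "hvf_app g0 g (VX a) f = vf_app (VX a) f"
  "hvf_app g0 g (VL a) f = (\<lambda>p. vf_app (VL a) f p - (1/2::real) *\<^sub>R ((g0 ** g a) *v f p))"
  "hvf_app g0 g (VO a b) f = (\<lambda>p. vf_app (VO a b) f p - (1/2::real) *\<^sub>R ((g a ** g b) *v f p))"
  by (auto simp del: vf_app.simps)

lemma smooth_hvf:
  assumes U: "open U" and f: "smooth_on U f"
  shows "smooth_on U (hvf_app g0 g v f)"
proof -
  have sl: "smooth_on U (\<lambda>p. (1/2::real) *\<^sub>R (M *v f p))" for M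
    by (rule smooth_lin[OF U bl_mv f])
  show ?thesis
    by (cases v) (simp_all only: hvf_eta smooth_vf[OF U f] smooth_diff[OF U] sl)
qed

lemma vf_loc:
  assumes U: "open U" and e: "eqU U f g"
  shows "eqU U (vf_app v f) (vf_app v g)"
  using eqU_dderiv[OF U e] by (cases v) (auto simp: eqU_def dt_def dx_def)

lemma hvf_loc:
  assumes U: "open U" and e: "eqU U f1 f2"
  shows "eqU U (hvf_app g0 g v f1) (hvf_app g0 g v f2)"
  using vf_loc[OF U e, of v] e by (cases v) (auto simp: eqU_def simp del: vf_app.simps)

lemma vf_add:
  assumes U: "open U" and f: "smooth_on U f" and g: "smooth_on U g"
  shows "eqU U (vf_app v (\<lambda>p. f p + g p)) (\<lambda>p. vf_app v f p + vf_app v g p)"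
  using dderiv_add[OF smooth_at[OF U f] smooth_at[OF U g]]
  by (cases v) (auto simp: eqU_def dt_def dx_def algebra_simps)

lemma hvf_add:
  assumes U: "open U" and f: "smooth_on U f1" and g: "smooth_on U f2"
  shows "eqU U (hvf_app g0 g v (\<lambda>p. f1 p + f2 p)) (\<lambda>p. hvf_app g0 g v f1 p + hvf_app g0 g v f2 p)"
  using vf_add[OF U f g, of v]
  by (cases v) (auto simp: eqU_def matrix_vector_right_distrib algebra_simps simp del: vf_app.simps)

lemma vf_scale:
  assumes U: "open U" and f: "smooth_on U f"
  shows "eqU U (vf_app v (\<lambda>p. c *\<^sub>R f p)) (\<lambda>p. c *\<^sub>R vf_app v f p)"
  using dderiv_lin[OF bounded_linear_scaleR_right smooth_at[OF U f]]
  by (cases v) (auto simp: eqU_def dt_def dx_def algebra_simps)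

lemma hvf_scale:
  assumes U: "open U" and f: "smooth_on U f"
  shows "eqU U (hvf_app g0 g v (\<lambda>p. c *\<^sub>R f p)) (\<lambda>p. c *\<^sub>R hvf_app g0 g v f p)"
  using vf_scale[OF U f, of v c]
  by (cases v) (auto simp: eqU_def mv_scaleR algebra_simps simp del: vf_app.simps)

lemma vf_zero: "vf_app v (\<lambda>p. 0) p = 0"
  by (cases v) (auto simp: dt_def dx_def dderiv_const)

lemma hvf_zero: "hvf_app g0 g v (\<lambda>p. 0) p = 0"
  by (cases v) (auto simp: dt_def dx_def dderiv_const)

lemma vf_prod:
  assumes P: "bounded_bilinear P" and f: "f differentiable (at p)" and g: "g differentiable (at p)"
  shows "vf_app v (\<lambda>q. P (f q) (g q)) p = P (vf_app v f p) (g p) + P (f p) (vf_app v g p)"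
  using dderiv_bil[OF P f g]
  by (cases v) (auto simp: dt_def dx_def bounded_bilinear.add_left[OF P] bounded_bilinear.add_right[OF P]
      bounded_bilinear.diff_left[OF P] bounded_bilinear.diff_right[OF P]
      bounded_bilinear.scaleR_left[OF P] bounded_bilinear.scaleR_right[OF P] algebra_simps)


lemma bar_add1: "bar g0 (u + v) w = bar g0 u w + bar g0 v w"
  by (simp add: bar_cdot cdot_add1)
lemma bar_add2: "bar g0 u (v + w) = bar g0 u v + bar g0 u w"
  by (simp add: bar_cdot cdot_add2 matrix_vector_right_distrib)
lemma bar_scaleR1: "bar g0 (c *\<^sub>R u) w = c *\<^sub>R bar g0 u w"
  by (simp only: bar_cdot cdot_scaleR1) (simp add: scaleR_conv_of_real)
lemma bar_scaleR2: "bar g0 u (c *\<^sub>R w) = c *\<^sub>R bar g0 u w"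
  by (simp only: bar_cdot mv_scaleR cdot_scaleR2) (simp add: scaleR_conv_of_real)
lemma bar_diff1': "bar g0 (u - v) w = bar g0 u w - bar g0 v w"
  by (simp add: bar_cdot cdot_diff1)
lemma bar_diff2': "bar g0 u (v - w) = bar g0 u v - bar g0 u w"
  by (simp add: bar_cdot cdot_diff2 matrix_vector_mult_diff_distrib)

lemma bar_bb: "bounded_bilinear (bar g0)"
proof -
  have "bilinear (bar g0)"
    unfolding bilinear_def
    by (auto intro!: linearI simp: bar_add1 bar_add2 bar_scaleR1 bar_scaleR2)
  then show ?thesis using bilinear_conv_bounded_bilinear by blast
qed

context
  fixes g0 :: "complex^'m^'m" and g :: "'n::finite \<Rightarrow> complex^'m^'m"
  assumes D: "dirac g0 g"
begin

lemma barL: "bar g0 ((g0 ** g a) *v f) h + bar g0 f ((g0 ** g a) *v h) = 0"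
proof -
  have "bar g0 ((g0 ** g a) *v f) h = cdot (g0 *v (g a *v f)) (g0 *v h)"
    by (simp add: bar_cdot matrix_vector_mul_assoc)
  also have "\<dots> = - cdot f (g a *v h)"
    by (simp add: cdot_g0[OF D] g0g0[OF D] cdot_ga[OF D])
  finally have 1: "bar g0 ((g0 ** g a) *v f) h = - cdot f (g a *v h)" .
  have 2: "bar g0 f ((g0 ** g a) *v h) = cdot f (g a *v h)"
    by (simp add: bar_cdot matrix_vector_mul_assoc[symmetric] g0g0[OF D])
  show ?thesis using 1 2 by simp
qed

lemma barO:
  assumes ab: "a \<noteq> b"
  shows "bar g0 ((g a ** g b) *v f) h + bar g0 f ((g a ** g b) *v h) = 0"
proof -
  have 1: "bar g0 ((g a ** g b) *v f) h = cdot f (g b *v (g a *v (g0 *v h)))"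
    by (simp add: bar_cdot matrix_vector_mul_assoc[symmetric] cdot_ga[OF D])
  have "bar g0 f ((g a ** g b) *v h) = cdot f (g0 *v (g a *v (g b *v h)))"
    by (simp add: bar_cdot matrix_vector_mul_assoc)
  also have "g0 *v (g a *v (g b *v h)) = g a *v (g b *v (g0 *v h))"
    by (simp only: g0ga[OF D] mv_neg minus_minus)
  also have "\<dots> = - (g b *v (g a *v (g0 *v h)))"
    by (rule gagb[OF D ab])
  finally have 2: "bar g0 f ((g a ** g b) *v h) = - cdot f (g b *v (g a *v (g0 *v h)))"
    by (simp add: cdot_neg2)
  show ?thesis using 1 2 by simp
qed

end

lemma inst1:
  fixes U :: "'n::finite pt set" and g0 :: "complex^'m^'m" and g :: "'n \<Rightarrow> complex^'m^'m"
  assumes U: "open U"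
  shows "leib U UNIV vf_app (hvf_app g0 g) (hvf_app g0 g) (scaleR :: real \<Rightarrow> complex^'m \<Rightarrow> complex^'m)"
proof (rule leib.intro)
  show "open U" by fact
  show "bounded_bilinear (scaleR :: real \<Rightarrow> complex^'m \<Rightarrow> complex^'m)" by (rule bounded_bilinear_scaleR)
next
  fix v :: "'n vf" and f :: "'n pt \<Rightarrow> real" assume "smooth_on U f"
  then show "smooth_on U (vf_app v f)" by (rule smooth_vf[OF U])
next
  fix v :: "'n vf" and f :: "'n pt \<Rightarrow> complex^'m" assume "smooth_on U f"
  then show "smooth_on U (hvf_app g0 g v f)" by (rule smooth_hvf[OF U])
next
  fix v :: "'n vf" and f :: "'n pt \<Rightarrow> complex^'m" assume "smooth_on U f"
  then show "smooth_on U (hvf_app g0 g v f)" by (rule smooth_hvf[OF U])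
next
  fix v :: "'n vf" and f1 f2 :: "'n pt \<Rightarrow> complex^'m" assume "eqU U f1 f2"
  then show "eqU U (hvf_app g0 g v f1) (hvf_app g0 g v f2)" by (rule hvf_loc[OF U])
next
  fix v :: "'n vf" and f1 f2 :: "'n pt \<Rightarrow> complex^'m" assume "smooth_on U f1" "smooth_on U f2"
  then show "eqU U (hvf_app g0 g v (\<lambda>p. f1 p + f2 p)) (\<lambda>p. hvf_app g0 g v f1 p + hvf_app g0 g v f2 p)"
    by (rule hvf_add[OF U])
next
  fix v :: "'n vf" and c :: real and f :: "'n pt \<Rightarrow> complex^'m" assume "smooth_on U f"
  then show "eqU U (hvf_app g0 g v (\<lambda>p. c *\<^sub>R f p)) (\<lambda>p. c *\<^sub>R hvf_app g0 g v f p)"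
    by (rule hvf_scale[OF U])
next
  fix v :: "'n vf"
  show "eqU U (hvf_app g0 g v (\<lambda>p. 0)) (\<lambda>p. 0)" by (simp add: eqU_def hvf_zero)
next
  fix v :: "'n vf" and f :: "'n pt \<Rightarrow> real" and h :: "'n pt \<Rightarrow> complex^'m"
  assume f: "smooth_on U f" and h: "smooth_on U h"
  show "eqU U (hvf_app g0 g v (\<lambda>p. f p *\<^sub>R h p)) (\<lambda>p. vf_app v f p *\<^sub>R h p + f p *\<^sub>R hvf_app g0 g v h p)"
    unfolding eqU_def
  proof
    fix p assume p: "p \<in> U"
    have pr: "vf_app w (\<lambda>q. f q *\<^sub>R h q) p = vf_app w f p *\<^sub>R h p + f p *\<^sub>R vf_app w h p" for w
      by (rule vf_prod[OF bounded_bilinear_scaleR smooth_at[OF U f p] smooth_at[OF U h p]])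
    show "hvf_app g0 g v (\<lambda>p. f p *\<^sub>R h p) p = vf_app v f p *\<^sub>R h p + f p *\<^sub>R hvf_app g0 g v h p"
      using pr[of v] by (cases v) (auto simp: mv_scaleR algebra_simps simp del: vf_app.simps)
  qed
qed

lemma inst2:
  fixes U :: "'n::finite pt set" and g0 :: "complex^'m^'m" and g :: "'n \<Rightarrow> complex^'m^'m"
  assumes U: "open U" and D: "dirac g0 g"
  shows "leib U {v. \<forall>a b. v = VO a b \<longrightarrow> a \<noteq> b} (hvf_app g0 g) (hvf_app g0 g) vf_app (bar g0)"
proof (rule leib.intro)
  show "open U" by fact
  show "bounded_bilinear (bar g0)" by (rule bar_bb)
next
  fix v :: "'n vf" and f :: "'n pt \<Rightarrow> complex^'m" assume "smooth_on U f"
  then show "smooth_on U (hvf_app g0 g v f)" by (rule smooth_hvf[OF U])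
next
  fix v :: "'n vf" and f :: "'n pt \<Rightarrow> complex^'m" assume "smooth_on U f"
  then show "smooth_on U (hvf_app g0 g v f)" by (rule smooth_hvf[OF U])
next
  fix v :: "'n vf" and f :: "'n pt \<Rightarrow> complex" assume "smooth_on U f"
  then show "smooth_on U (vf_app v f)" by (rule smooth_vf[OF U])
next
  fix v :: "'n vf" and f1 f2 :: "'n pt \<Rightarrow> complex" assume "eqU U f1 f2"
  then show "eqU U (vf_app v f1) (vf_app v f2)" by (rule vf_loc[OF U])
next
  fix v :: "'n vf" and f1 f2 :: "'n pt \<Rightarrow> complex" assume "smooth_on U f1" "smooth_on U f2"
  then show "eqU U (vf_app v (\<lambda>p. f1 p + f2 p)) (\<lambda>p. vf_app v f1 p + vf_app v f2 p)"
    by (rule vf_add[OF U])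
next
  fix v :: "'n vf" and c :: real and f :: "'n pt \<Rightarrow> complex" assume "smooth_on U f"
  then show "eqU U (vf_app v (\<lambda>p. c *\<^sub>R f p)) (\<lambda>p. c *\<^sub>R vf_app v f p)"
    by (rule vf_scale[OF U])
next
  fix v :: "'n vf"
  show "eqU U (vf_app v (\<lambda>p. 0 :: complex)) (\<lambda>p. 0)" by (simp add: eqU_def vf_zero)
next
  fix v :: "'n vf" and f h :: "'n pt \<Rightarrow> complex^'m"
  assume v: "v \<in> {v. \<forall>a b. v = VO a b \<longrightarrow> a \<noteq> b}" and f: "smooth_on U f" and h: "smooth_on U h"
  show "eqU U (vf_app v (\<lambda>p. bar g0 (f p) (h p)))
     (\<lambda>p. bar g0 (hvf_app g0 g v f p) (h p) + bar g0 (f p) (hvf_app g0 g v h p))"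
    unfolding eqU_def
  proof
    fix p assume p: "p \<in> U"
    have pr: "vf_app v (\<lambda>q. bar g0 (f q) (h q)) p = bar g0 (vf_app v f p) (h p) + bar g0 (f p) (vf_app v h p)"
      by (rule vf_prod[OF bar_bb smooth_at[OF U f p] smooth_at[OF U h p]])
    show "vf_app v (\<lambda>p. bar g0 (f p) (h p)) p = bar g0 (hvf_app g0 g v f p) (h p) + bar g0 (f p) (hvf_app g0 g v h p)"
    proof (cases v)
      case (VL a)
      have z: "bar g0 ((g0 ** g a) *v f p) (h p) + bar g0 (f p) ((g0 ** g a) *v h p) = 0"
        by (rule barL[OF D])
      have "bar g0 (hvf_app g0 g v f p) (h p) + bar g0 (f p) (hvf_app g0 g v h p)
          = bar g0 (vf_app v f p) (h p) + bar g0 (f p) (vf_app v h p)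
            - (1/2::real) *\<^sub>R (bar g0 ((g0 ** g a) *v f p) (h p) + bar g0 (f p) ((g0 ** g a) *v h p))"
        unfolding VL hvf_eta by (simp only: bar_diff1' bar_diff2' bar_scaleR1 bar_scaleR2 scaleR_add_right) (simp add: algebra_simps)
      then show ?thesis using pr z by simp
    next
      case (VO a b)
      then have ab: "a \<noteq> b" using v by simp
      have z: "bar g0 ((g a ** g b) *v f p) (h p) + bar g0 (f p) ((g a ** g b) *v h p) = 0"
        by (rule barO[OF D ab])
      have "bar g0 (hvf_app g0 g v f p) (h p) + bar g0 (f p) (hvf_app g0 g v h p)
          = bar g0 (vf_app v f p) (h p) + bar g0 (f p) (vf_app v h p)
            - (1/2::real) *\<^sub>R (bar g0 ((g a ** g b) *v f p) (h p) + bar g0 (f p) ((g a ** g b) *v h p))"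
        unfolding VO hvf_eta by (simp only: bar_diff1' bar_diff2' bar_scaleR1 bar_scaleR2 scaleR_add_right) (simp add: algebra_simps)
      then show ?thesis using pr z by simp
    qed (use pr in \<open>simp_all del: vf_app.simps\<close>)
  qed
qed

lemma len_vf_list:
  assumes "CARD('n::{finite,linorder}) = 2 \<or> CARD('n) = 3"
  shows "n0 CARD('n) \<le> length (vf_list :: 'n vf list)"
proof -
  define xs where "xs = sorted_list_of_set (UNIV :: 'n set)"
  have lx: "length xs = CARD('n)" by (simp add: xs_def length_sorted_list_of_set)
  have sx: "sorted_wrt (<) xs" by (simp add: xs_def strict_sorted_list_of_set)
  have vl: "vf_list = [VT] @ map VX xs @ map VL xs @ [VO a b. a \<leftarrow> xs, b \<leftarrow> xs, a < b]"
    by (simp add: vf_list_def xs_def Let_def)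
  from assms show ?thesis
  proof
    assume c: "CARD('n) = 2"
    have "length xs = Suc (Suc 0)" using lx c by simp
    then obtain x0 x1 where "xs = [x0, x1]" by (auto simp: length_Suc_conv)
    moreover have "x0 < x1" using sx calculation by simp
    ultimately have "[VO a b. a \<leftarrow> xs, b \<leftarrow> xs, a < b] = [VO x0 x1]" by auto
    then have "length (vf_list :: 'n vf list) = 6" using lx c by (simp add: vl)
    then show ?thesis using c by (simp add: n0_def)
  next
    assume c: "CARD('n) = 3"
    have "length xs = Suc (Suc (Suc 0))" using lx c by simp
    then obtain x0 x1 x2 where "xs = [x0, x1, x2]" by (auto simp: length_Suc_conv)
    moreover have "x0 < x1" "x1 < x2" "x0 < x2" using sx calculation by auto
    ultimately have "[VO a b. a \<leftarrow> xs, b \<leftarrow> xs, a < b] = [VO x0 x1, VO x0 x2, VO x1 x2]" by auto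
    then have "length (vf_list :: 'n vf list) = 10" using lx c by (simp add: vl)
    then show ?thesis using c by (simp add: n0_def)
  qed
qed

lemma vf_list_V: "set (vf_list :: 'n::{finite,linorder} vf list) \<subseteq> {v. \<forall>a b. v = VO a b \<longrightarrow> a \<noteq> b}"
  by (auto simp: vf_list_def Let_def)

lemma GamI_Fop: "GamI I f = Fop vf_app vf_list I f"
  by (simp add: GamI_def Fop_def)
lemma hGamI_Fop: "hGamI g0 g I f = Fop (hvf_app g0 g) vf_list I f"
  by (simp add: hGamI_def Fop_def)

lemma minus_r_Kop: "dirac g0 g \<Longrightarrow> minus_r g0 g p w = w - Kop g0 g (\<lambda>a. snd p $ a / rad p) w"
  by (simp add: minus_r_def Kop_def)
lemma minus_t_Kop: "dirac g0 g \<Longrightarrow> minus_t g0 g p w = w - Kop g0 g (\<lambda>a. snd p $ a / fst p) w"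
  by (simp add: minus_t_def Kop_def)

lemma le_C_mult: "1 \<le> c \<Longrightarrow> 0 \<le> x \<Longrightarrow> x \<le> c * (x::real)"
  using mult_right_mono[of 1 c x] by simp

lemma omega_props:
  fixes x :: "real^'n::finite"
  assumes nx: "norm x \<noteq> 0"
  shows "(\<Sum>a\<in>UNIV. (x $ a / norm x)^2) = 1" "\<And>a. \<bar>x $ a / norm x\<bar> \<le> 1"
proof -
  have nv: "norm x = sqrt (\<Sum>a\<in>UNIV. (x $ a)^2)"
    unfolding norm_vec_def L2_set_def real_norm_def power2_abs ..
  have n2: "(norm x)^2 = (\<Sum>a\<in>UNIV. (x $ a)^2)"
    unfolding nv by (rule real_sqrt_pow2) (rule sum_nonneg, simp)
  have nz: "(norm x)^2 \<noteq> 0" using nx by simp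
  have "(\<Sum>a\<in>UNIV. (x $ a / norm x)^2) = (\<Sum>a\<in>UNIV. (x $ a)^2 / (norm x)^2)"
    by (simp only: power_divide)
  also have "\<dots> = (\<Sum>a\<in>UNIV. (x $ a)^2) / (norm x)^2"
    by (rule sum_divide_distrib[symmetric])
  also have "\<dots> = 1"
    by (subst n2[symmetric]) (rule divide_self[OF nz])
  finally show "(\<Sum>a\<in>UNIV. (x $ a / norm x)^2) = 1" .
  fix a
  have le: "\<bar>x $ a\<bar> \<le> norm x" by (rule component_le_norm_cart)
  have pos: "0 < norm x" using nx by simp
  show "\<bar>x $ a / norm x\<bar> \<le> 1"
  proof -
    have "\<bar>x $ a\<bar> / norm x \<le> 1" using le pos by (simp only: divide_le_eq_1_pos)
    then show ?thesis by (simp only: abs_divide abs_norm_cancel)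
  qed
qed

theorem lemma2p17:
  assumes "CARD('n::{finite,linorder}) = 2 \<or> CARD('n) = 3"
    and "CARD('m::finite) = N0 CARD('n)"
  shows
  "(\<forall>(g0::complex^'m^'m) (g::'n \<Rightarrow> complex^'m^'m) U (u::'n pt \<Rightarrow> real) (f::'n pt \<Rightarrow> complex^'m) h I p.
      dirac g0 g \<and> open U \<and> {q. fst q \<ge> 2} \<subseteq> U \<and>
      smooth_on U u \<and> smooth_on U f \<and> smooth_on U h \<and>
      length I = n0 CARD('n) \<and> fst p \<ge> 2 \<longrightarrow>
        hGamI g0 g I (\<lambda>q. u q *\<^sub>R f q) p =
          (\<Sum>J\<in>subidx I. real (mbinom I J) *\<^sub>R (GamI J u p *\<^sub>R hGamI g0 g (idx_diff I J) f p))
      \<and> GamI I (\<lambda>q. bar g0 (f q) (h q)) p =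
          (\<Sum>J\<in>subidx I. of_nat (mbinom I J) *
              bar g0 (hGamI g0 g J f p) (hGamI g0 g (idx_diff I J) h p)))
   \<and> (\<exists>C>0. \<forall>(g0::complex^'m^'m) (g::'n \<Rightarrow> complex^'m^'m) U (f::'n pt \<Rightarrow> complex^'m) h p.
      dirac g0 g \<and> open U \<and> {q. fst q \<ge> 2} \<subseteq> U \<and>
      smooth_on U f \<and> smooth_on U h \<and> fst p \<ge> 2 \<longrightarrow>
        (rad p \<noteq> 0 \<longrightarrow>
          norm (bar g0 (f p) (h p)) \<le>
            C * (norm (minus_r g0 g p (f p)) * norm (h p) + norm (f p) * norm (minus_r g0 g p (h p))))
      \<and> (rad p < fst p \<longrightarrow>
          norm (bar g0 (f p) (h p)) \<le>
            C * (norm (minus_t g0 g p (f p)) * norm (h p) + norm (f p) * norm (minus_t g0 g p (h p))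
                 + \<bar>(fst p)^2 - (rad p)^2\<bar> / (fst p)^2 * norm (f p) * norm (h p)))
      \<and> (rad p \<noteq> 0 \<longrightarrow>
          norm (minus_r g0 g p (dirac_op g0 g f p)) \<le> C * Gnorm f p))"
proof (rule conjI)
  have len: "n0 CARD('n) \<le> length (vf_list :: 'n vf list)" by (rule len_vf_list[OF assms(1)])
  show "\<forall>(g0::complex^'m^'m) (g::'n \<Rightarrow> complex^'m^'m) U (u::'n pt \<Rightarrow> real) (f::'n pt \<Rightarrow> complex^'m) h I p.
      dirac g0 g \<and> open U \<and> {q. fst q \<ge> 2} \<subseteq> U \<and>
      smooth_on U u \<and> smooth_on U f \<and> smooth_on U h \<and>
      length I = n0 CARD('n) \<and> fst p \<ge> 2 \<longrightarrow>
        hGamI g0 g I (\<lambda>q. u q *\<^sub>R f q) p =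
          (\<Sum>J\<in>subidx I. real (mbinom I J) *\<^sub>R (GamI J u p *\<^sub>R hGamI g0 g (idx_diff I J) f p))
      \<and> GamI I (\<lambda>q. bar g0 (f q) (h q)) p =
          (\<Sum>J\<in>subidx I. of_nat (mbinom I J) *
              bar g0 (hGamI g0 g J f p) (hGamI g0 g (idx_diff I J) h p))"
  proof (intro allI impI)
    fix g0 :: "complex^'m^'m" and g :: "'n \<Rightarrow> complex^'m^'m" and U :: "'n pt set" and u :: "'n pt \<Rightarrow> real"
      and f :: "'n pt \<Rightarrow> complex^'m" and h :: "'n pt \<Rightarrow> complex^'m" and I :: "nat list" and p :: "'n pt"
    assume H: "dirac g0 g \<and> open U \<and> {q. fst q \<ge> 2} \<subseteq> U \<and>
      smooth_on U u \<and> smooth_on U f \<and> smooth_on U h \<and>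
      length I = n0 CARD('n) \<and> fst p \<ge> (2::real)"
    then have D: "dirac g0 g" and U: "open U" and pU: "p \<in> U" and su: "smooth_on U u"
      and sf: "smooth_on U f" and sh: "smooth_on U h" and lI: "length I \<le> length (vf_list :: 'n vf list)"
      using len by auto
    have e1: "eqU U (Fop (hvf_app g0 g) vf_list I (\<lambda>p. u p *\<^sub>R f p))
       (\<lambda>p. \<Sum>J\<in>subidx I. real (mbinom I J) *\<^sub>R (Fop vf_app vf_list J u p *\<^sub>R Fop (hvf_app g0 g) vf_list (idx_diff I J) f p))"
      by (rule leib.leibniz_multi[OF inst1[OF U]]) (use lI su sf in auto)
    have e2: "eqU U (Fop vf_app vf_list I (\<lambda>p. bar g0 (f p) (h p)))
       (\<lambda>p. \<Sum>J\<in>subidx I. real (mbinom I J) *\<^sub>R bar g0 (Fop (hvf_app g0 g) vf_list J f p) (Fop (hvf_app g0 g) vf_list (idx_diff I J) h p))"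
      by (rule leib.leibniz_multi[OF inst2[OF U D]]) (use lI sf sh vf_list_V in auto)
    have a1: "Fop (hvf_app g0 g) vf_list I (\<lambda>p. u p *\<^sub>R f p) p =
       (\<Sum>J\<in>subidx I. real (mbinom I J) *\<^sub>R (Fop vf_app vf_list J u p *\<^sub>R Fop (hvf_app g0 g) vf_list (idx_diff I J) f p))"
      using e1 pU unfolding eqU_def by blast
    have a2: "Fop vf_app vf_list I (\<lambda>p. bar g0 (f p) (h p)) p =
       (\<Sum>J\<in>subidx I. real (mbinom I J) *\<^sub>R bar g0 (Fop (hvf_app g0 g) vf_list J f p) (Fop (hvf_app g0 g) vf_list (idx_diff I J) h p))"
      using e2 pU unfolding eqU_def by blast
    show "hGamI g0 g I (\<lambda>q. u q *\<^sub>R f q) p =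
          (\<Sum>J\<in>subidx I. real (mbinom I J) *\<^sub>R (GamI J u p *\<^sub>R hGamI g0 g (idx_diff I J) f p))
      \<and> GamI I (\<lambda>q. bar g0 (f q) (h q)) p =
          (\<Sum>J\<in>subidx I. of_nat (mbinom I J) *
              bar g0 (hGamI g0 g J f p) (hGamI g0 g (idx_diff I J) h p))"
    proof (rule conjI)
      show "hGamI g0 g I (\<lambda>q. u q *\<^sub>R f q) p =
          (\<Sum>J\<in>subidx I. real (mbinom I J) *\<^sub>R (GamI J u p *\<^sub>R hGamI g0 g (idx_diff I J) f p))"
        unfolding GamI_Fop hGamI_Fop by (rule a1)
      have "(real (mbinom I J) *\<^sub>R z) = (of_nat (mbinom I J) * z :: complex)" for J z
        by (simp add: scaleR_conv_of_real)
      then show "GamI I (\<lambda>q. bar g0 (f q) (h q)) p =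
          (\<Sum>J\<in>subidx I. of_nat (mbinom I J) *
              bar g0 (hGamI g0 g J f p) (hGamI g0 g (idx_diff I J) h p))"
        unfolding GamI_Fop hGamI_Fop a2 by simp
    qed
  qed
next
  let ?C = "(1 + real CARD('n)) * real CARD('n)"
  have c1: "1 \<le> real CARD('n)" using finite_UNIV_card_ge_0[where 'a='n] by simp
  have "1 * 1 \<le> ?C" by (rule mult_mono) (use c1 in auto)
  then have C1: "1 \<le> ?C" by simp
  show "\<exists>C>0. \<forall>(g0::complex^'m^'m) (g::'n \<Rightarrow> complex^'m^'m) U (f::'n pt \<Rightarrow> complex^'m) h p.
      dirac g0 g \<and> open U \<and> {q. fst q \<ge> 2} \<subseteq> U \<and>
      smooth_on U f \<and> smooth_on U h \<and> fst p \<ge> 2 \<longrightarrow>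
        (rad p \<noteq> 0 \<longrightarrow>
          norm (bar g0 (f p) (h p)) \<le>
            C * (norm (minus_r g0 g p (f p)) * norm (h p) + norm (f p) * norm (minus_r g0 g p (h p))))
      \<and> (rad p < fst p \<longrightarrow>
          norm (bar g0 (f p) (h p)) \<le>
            C * (norm (minus_t g0 g p (f p)) * norm (h p) + norm (f p) * norm (minus_t g0 g p (h p))
                 + \<bar>(fst p)^2 - (rad p)^2\<bar> / (fst p)^2 * norm (f p) * norm (h p)))
      \<and> (rad p \<noteq> 0 \<longrightarrow>
          norm (minus_r g0 g p (dirac_op g0 g f p)) \<le> C * Gnorm f p)"
  proof (intro exI[of _ ?C] conjI allI impI)
    show "0 < ?C" using C1 by linarith
  next
    fix g0 :: "complex^'m^'m" and g :: "'n \<Rightarrow> complex^'m^'m" and U :: "'n pt set" and f :: "'n pt \<Rightarrow> complex^'m" and h :: "'n pt \<Rightarrow> complex^'m" and p :: "'n pt"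
    assume H: "dirac g0 g \<and> open U \<and> {q. fst q \<ge> 2} \<subseteq> U \<and>
      smooth_on U f \<and> smooth_on U h \<and> fst p \<ge> (2::real)"
    then have D: "dirac g0 g" by blast
    {
      assume "rad p \<noteq> 0"
      have "norm (bar g0 (f p) (h p)) \<le> norm (minus_r g0 g p (f p)) * norm (h p) + norm (f p) * norm (minus_r g0 g p (h p))"
        unfolding minus_r_Kop[OF D] by (rule bar_bound[OF D])
      also have "\<dots> \<le> ?C * (norm (minus_r g0 g p (f p)) * norm (h p) + norm (f p) * norm (minus_r g0 g p (h p)))"
        by (rule le_C_mult[OF C1]) simp
      finally show "norm (bar g0 (f p) (h p)) \<le> ?C * (norm (minus_r g0 g p (f p)) * norm (h p) + norm (f p) * norm (minus_r g0 g p (h p)))" .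
    }
    {
      assume "rad p < fst p"
      have "norm (bar g0 (f p) (h p)) \<le> norm (minus_t g0 g p (f p)) * norm (h p) + norm (f p) * norm (minus_t g0 g p (h p))"
        unfolding minus_t_Kop[OF D] by (rule bar_bound[OF D])
      also have "\<dots> \<le> norm (minus_t g0 g p (f p)) * norm (h p) + norm (f p) * norm (minus_t g0 g p (h p))
                 + \<bar>(fst p)^2 - (rad p)^2\<bar> / (fst p)^2 * norm (f p) * norm (h p)"
        by simp
      also have "\<dots> \<le> ?C * (norm (minus_t g0 g p (f p)) * norm (h p) + norm (f p) * norm (minus_t g0 g p (h p))
                 + \<bar>(fst p)^2 - (rad p)^2\<bar> / (fst p)^2 * norm (f p) * norm (h p))"
        by (rule le_C_mult[OF C1]) simp
      finally show "norm (bar g0 (f p) (h p)) \<le> ?C * (norm (minus_t g0 g p (f p)) * norm (h p) + norm (f p) * norm (minus_t g0 g p (h p))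
                 + \<bar>(fst p)^2 - (rad p)^2\<bar> / (fst p)^2 * norm (f p) * norm (h p))" .
    }
    {
      assume r: "rad p \<noteq> 0"
      have o: "(\<Sum>a\<in>UNIV. (snd p $ a / rad p)^2) = 1" "\<And>a. \<bar>snd p $ a / rad p\<bar> \<le> 1"
        using omega_props[of "snd p"] r by (auto simp: rad_def)
      show "norm (minus_r g0 g p (dirac_op g0 g f p)) \<le> ?C * Gnorm f p"
        unfolding minus_r_Kop[OF D] dirac_op_def Gnorm_def
        by (rule dirac_bound[OF D o])
    }
  qed
qed

end
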